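(* Let the open set $\Omega\subseteq\mathbb{R}^{n+1}$ satisfy the TBHCC with constants $b,\varepsilon>0$. There exist $a\in(0,1/2)$ and $c_3>0$, depending only on $n$, $b$, $\varepsilon$, and a constant $C_1>0$ depending only on $n$, such that for every $(x_0,t_0)\in\Sigma$ and $0<r<\sqrt{t_0-T_{\min}}/4$ there is a Borel measure $\mu$ on $\mathbb{R}^{n+1}$ with $$\mu\big((Q_r(x_0)\times(t_0-r^2,t_0-(ar)^2))\cap\Omega^c\big)\ge c_3r^{n+\varepsilon}$$ and $\mu(A)\le C_1(\operatorname{diam}_pA)^{n+\varepsilon}$ for all Borel sets $A\subseteq\mathbb{R}^{n+1}$.
   Context: Points of $\mathbb{R}^{n+1}=\mathbb{R}^n\times\mathbb{R}$; parabolic norm $\|(X,t)\|=\max\{|X|,|t|^{1/2}\}$; $\operatorname{diam}_p$ is diameter in the parabolic distance. $\mathbf{Q}_r(X,t)=\{(Y,s):\|(X,t)-(Y,s)\|<r\}$, $\mathbf{Q}_r^{\mp}(X,t)=\mathbf{Q}_r(X,t)\cap\{s\lessgtr t\}$, $Q_r(X)=\{Y\in\mathbb{R}^n:|X-Y|<r\}$. Boundary: $T_{\min},T_{\max}$ inf/sup of times meeting $\Omega$; $\mathcal{P}\Omega=\{(x,t)\in\partial\Omega:\mathbf{Q}^-_r(x,t)\cap\Omega^c\ne\emptyset\ \forall r\}$; $\mathcal{B}\Omega=\{(x,t)\in\mathcal{P}\Omega:\exists r,\mathbf{Q}_r^+(x,t)\subseteq\Omega\}$; $\partial_s\Omega=\{(x,t)\in\partial\Omega\setminus\mathcal{P}\Omega:\exists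 r,\mathbf{Q}_r^+(x,t)\cap\Omega=\emptyset\}$; $\Sigma$ is $\partial\Omega$ minus $\mathcal{B}\Omega\cap\{t=T_{\min}\}$ (if $T_{\min}>-\infty$) and minus $\partial_s\Omega\cap\{t=T_{\max}\}$ (if $T_{\max}<\infty$). Hausdorff content $\mathcal{H}^s_{\infty,p}(A)=\inf\{\sum_i(\operatorname{diam}_pA_i)^s:A\subseteq\bigcup_iA_i\}$. TBHCC with constants $b,\varepsilon$: $\mathcal{H}^{n+\varepsilon}_{\infty,p}(\mathbf{Q}^-_r(x_0,t_0)\cap\Omega^c)\ge b\,r^{n+\varepsilon}$ for all $(x_0,t_0)\in\Sigma$, $0<r<\sqrt{t_0-T_{\min}}/4$. *)

theory Defs
  imports "HOL-Analysis.Analysis"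
begin

text \<open>Points of R^(n+1) = R^n x R are pairs (X,t) :: (real^'n) \<times> real, with n = CARD('n).\<close>

type_synonym 'n pt = "(real^'n) \<times> real"

definition pnorm :: "'n::finite pt \<Rightarrow> real" where
  "pnorm p = max (norm (fst p)) (sqrt \<bar>snd p\<bar>)"

definition pdist :: "'n::finite pt \<Rightarrow> 'n pt \<Rightarrow> real" where
  "pdist p q = pnorm (p - q)"

text \<open>Parabolic diameter (only meaningful for bounded sets; used only on bounded sets).\<close>
definition pdiam :: "'n::finite pt set \<Rightarrow> real" where
  "pdiam A = (if A = {} then 0 else (SUP pq\<in>A \<times> A. pdist (fst pq) (snd pq)))"

definition PQ :: "real \<Rightarrow> 'n::finite pt \<Rightarrow> 'n pt set" where
  "PQ r p = {q. pdist p q < r}"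

definition PQminus :: "real \<Rightarrow> 'n::finite pt \<Rightarrow> 'n pt set" where
  "PQminus r p = PQ r p \<inter> {q. snd q < snd p}"

definition PQplus :: "real \<Rightarrow> 'n::finite pt \<Rightarrow> 'n pt set" where
  "PQplus r p = PQ r p \<inter> {q. snd q > snd p}"

definition Tmin :: "'n::finite pt set \<Rightarrow> ereal" where
  "Tmin \<Omega> = (INF p\<in>\<Omega>. ereal (snd p))"

definition Tmax :: "'n::finite pt set \<Rightarrow> ereal" where
  "Tmax \<Omega> = (SUP p\<in>\<Omega>. ereal (snd p))"

definition parabolic_bdry :: "'n::finite pt set \<Rightarrow> 'n pt set" where
  "parabolic_bdry \<Omega> = {p \<in> frontier \<Omega>. \<forall>r>0. PQminus r p \<inter> - \<Omega> \<noteq> {}}"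

definition bottom_bdry :: "'n::finite pt set \<Rightarrow> 'n pt set" where
  "bottom_bdry \<Omega> = {p \<in> parabolic_bdry \<Omega>. \<exists>r>0. PQplus r p \<subseteq> \<Omega>}"

definition singular_bdry :: "'n::finite pt set \<Rightarrow> 'n pt set" where
  "singular_bdry \<Omega> = {p \<in> frontier \<Omega> - parabolic_bdry \<Omega>. \<exists>r>0. PQplus r p \<inter> \<Omega> = {}}"

definition Sigma_bdry :: "'n::finite pt set \<Rightarrow> 'n pt set" where
  "Sigma_bdry \<Omega> = frontier \<Omega>
     - (if Tmin \<Omega> > -\<infinity> then {p \<in> bottom_bdry \<Omega>. ereal (snd p) = Tmin \<Omega>} else {})
     - (if Tmax \<Omega> < \<infinity> then {p \<in> singular_bdry \<Omega>. ereal (snd p) = Tmax \<Omega>} else {})"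

text \<open>Parabolic Hausdorff content, countable covers. Covers by unbounded sets contribute
  infinity and are omitted (only bounded covering sets are allowed).\<close>
definition phcontent :: "real \<Rightarrow> 'n::finite pt set \<Rightarrow> ennreal" where
  "phcontent s A = (INF C\<in>{C :: nat \<Rightarrow> 'n pt set. A \<subseteq> (\<Union>i. C i) \<and> (\<forall>i. bounded (C i))}.
       (\<Sum>i. ennreal (pdiam (C i) powr s)))"

text \<open>Time-backwards Hausdorff content condition. The radius condition
  0 < r < sqrt(t0 - Tmin)/4 is written as Tmin < t0 - (4r)^2 (in the extended reals).\<close>
definition TBHCC :: "'n::finite pt set \<Rightarrow> real \<Rightarrow> real \<Rightarrow> bool" where
  "TBHCC \<Omega> b \<epsilon> \<longleftrightarrow> (\<forall>p\<in>Sigma_bdry \<Omega>. \<forall>r. 0 < r \<and> Tmin \<Omega> < ereal (snd p - (4*r)^2) \<longrightarrow>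
      phcontent (real CARD('n) + \<epsilon>) (PQminus r p \<inter> - \<Omega>) \<ge> ennreal (b * r powr (real CARD('n) + \<epsilon>)))"

end

theory Submission
  imports Defs "HOL-Analysis.Analysis"
begin

fun tnu :: "(bool list \<Rightarrow> real) \<Rightarrow> bool list \<Rightarrow> real" where
  "tnu F [] = F []"
| "tnu F (b#w) = (if F (False#w) + F (True#w) = 0 then 0
      else tnu F w * F (b#w) / (F (False#w) + F (True#w)))"

fun talpha :: "(bool list \<Rightarrow> real) \<Rightarrow> bool list \<Rightarrow> real" where
  "talpha F [] = 0"
| "talpha F (False#w) = talpha F w"
| "talpha F (True#w) = talpha F w + tnu F (False#w)"

fun tpath :: "(bool list \<Rightarrow> real) \<Rightarrow> real \<Rightarrow> nat \<Rightarrow> bool list" where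
  "tpath F u 0 = []"
| "tpath F u (Suc d) = (talpha F (tpath F u d) + tnu F (False # tpath F u d) \<le> u) # tpath F u d"

lemma tpath_length[simp]: "length (tpath F u d) = d"
  by (induction d) auto

lemma tpath_suffix: "\<exists>v. tpath F u (d + j) = v @ tpath F u d"
proof (induction j)
  case 0 then show ?case by auto
next
  case (Suc j)
  then obtain v where "tpath F u (d + j) = v @ tpath F u d" by auto
  then show ?case by (auto intro: exI[of _ "_ # v"])
qed

context
  fixes F :: "bool list \<Rightarrow> real"
  assumes F0: "\<And>w. 0 \<le> F w" and Fsub: "\<And>w. F w \<le> F (False#w) + F (True#w)"
begin

lemma tnu_nonneg_le: "0 \<le> tnu F w \<and> tnu F w \<le> F w"
proof (induction w)
  case Nil then show ?case using F0 by simp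
next
  case (Cons b w)
  show ?case
  proof (cases "F (False#w) + F (True#w) = 0")
    case True then show ?thesis using F0[of "b#w"] by simp
  next
    case False
    let ?D = "F (False#w) + F (True#w)"
    have D: "?D > 0" using False F0[of "False#w"] F0[of "True#w"] by linarith
    have "tnu F w * F (b#w) / ?D \<le> F w * F (b#w) / ?D"
      using Cons F0[of "b#w"] D by (intro divide_right_mono mult_right_mono) auto
    also have "\<dots> \<le> ?D * F (b#w) / ?D"
      using Fsub[of w] F0[of "b#w"] D by (intro divide_right_mono mult_right_mono) auto
    also have "\<dots> = F (b#w)" using D by simp
    finally show ?thesis using False Cons F0[of "b#w"] D by simp
  qed
qed

lemma tnu_split: assumes "0 < tnu F w" shows "tnu F (False#w) + tnu F (True#w) = tnu F w"
proof -
  let ?D = "F (False#w) + F (True#w)"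
  have "tnu F w \<le> F w" using tnu_nonneg_le by blast
  then have D: "?D > 0" using Fsub[of w] assms by linarith
  have "tnu F (False#w) + tnu F (True#w) = tnu F w * (F (False#w) + F (True#w)) / ?D"
    using D by (simp add: add_divide_distrib distrib_left)
  also have "\<dots> = tnu F w" using D by simp
  finally show ?thesis .
qed

lemma tpath_in:
  assumes "0 \<le> u" "u < F []"
  shows "talpha F (tpath F u d) \<le> u \<and> u < talpha F (tpath F u d) + tnu F (tpath F u d)"
proof (induction d)
  case 0 then show ?case using assms by simp
next
  case (Suc d)
  let ?w = "tpath F u d"
  have pos: "0 < tnu F ?w" using Suc by linarith
  show ?case
  proof (cases "talpha F ?w + tnu F (False # ?w) \<le> u")
    case True
    then show ?thesis using Suc tnu_split[OF pos] by simp
  next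
    case False
    then show ?thesis using Suc by simp
  qed
qed



end

lemma S_suffix:
  assumes "\<And>b w. S (b#w) \<subseteq> S w"
  shows "S (v @ w) \<subseteq> S w"
  using assms by (induction v) auto

lemma cons_meas: "(\<lambda>u::real. (c \<le> u) # w) \<in> borel \<rightarrow>\<^sub>M count_space UNIV"
  by measurable
lemma tpath_meas: "(\<lambda>u. tpath F u d) \<in> borel \<rightarrow>\<^sub>M count_space UNIV"
proof (induction d)
  case 0 
  have "(\<lambda>u::real. [] :: bool list) \<in> borel \<rightarrow>\<^sub>M count_space UNIV" by (rule measurable_const) simp
  then show ?case by (simp only: tpath.simps)
next
  case (Suc d)
  have c: "(\<lambda>u::real. (talpha F w + tnu F (False # w) \<le> u) # w) \<in> borel \<rightarrow>\<^sub>M count_space UNIV" for w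
    by (rule cons_meas)
  note m = measurable_compose_countable[where f="\<lambda>w u. (talpha F w + tnu F (False # w) \<le> u) # w"
           and g = "\<lambda>u. tpath F u d", OF c Suc]
  have eq: "(\<lambda>u. tpath F u (Suc d)) = (\<lambda>u. (\<lambda>w u. (talpha F w + tnu F (False # w) \<le> u) # w) (tpath F u d) u)"
    by (simp only: tpath.simps)
  show ?case by (subst eq) (rule m)
qed

lemma tree_measure:
  fixes K :: "'a::complete_space set" and S Sc :: "bool list \<Rightarrow> 'a set"
  assumes K: "closed K"
    and F0: "\<And>w. 0 \<le> F w" and Fsub: "\<And>w. F w \<le> F (False#w) + F (True#w)"
    and FK: "\<And>w. 0 < F w \<Longrightarrow> S w \<inter> K \<noteq> {}"
    and Snest: "\<And>b w. S (b#w) \<subseteq> S w"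
    and Sc: "\<And>w. S w \<subseteq> Sc w" and Scc: "\<And>w. closed (Sc w)"
    and small: "\<And>e. 0 < e \<Longrightarrow> \<exists>D. \<forall>w. length w = D \<longrightarrow> (\<forall>x\<in>S w. \<forall>y\<in>S w. dist x y < e)"
  shows "\<exists>\<mu>. sets \<mu> = sets borel \<and> emeasure \<mu> K = ennreal (F []) \<and>
     (\<forall>A\<in>sets borel. \<forall>d. emeasure \<mu> A \<le> ennreal (\<Sum>w\<in>{w. length w = d \<and> Sc w \<inter> A \<noteq> {}}. F w))"
proof -
  define M where "M = F []"
  define pt where "pt w = (SOME x. x \<in> S w \<inter> K)" for w
  define g where "g d u = (if 0 \<le> u \<and> u < M then pt (tpath F u d) else undefined)" for d u
  define f where "f u = lim (\<lambda>d. g d u)" for u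
  have inI: "talpha F (tpath F u d) \<le> u \<and> u < talpha F (tpath F u d) + tnu F (tpath F u d)"
    if "0 \<le> u" "u < M" for u d
    using tpath_in[OF F0 Fsub] that M_def by blast
  have ptin: "pt (tpath F u d) \<in> S (tpath F u d) \<inter> K" if "0 \<le> u" "u < M" for u d
  proof -
    have "0 < tnu F (tpath F u d)" using inI[OF that, of d] by linarith
    then have "0 < F (tpath F u d)" using tnu_nonneg_le[OF F0 Fsub, of "tpath F u d"] by linarith
    then have "S (tpath F u d) \<inter> K \<noteq> {}" using FK by blast
    then show ?thesis unfolding pt_def by (metis (no_types, lifting) ex_in_conv someI)
  qed
  have sub: "S (tpath F u j) \<subseteq> S (tpath F u d)" if "d \<le> j" for u d j
  proof -
    obtain v where v: "tpath F u (d + (j - d)) = v @ tpath F u d" using tpath_suffix by blast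
    have "d + (j - d) = j" using that by simp
    then have "tpath F u j = v @ tpath F u d" using v by simp
    then show ?thesis using S_suffix[of S v "tpath F u d", OF Snest] by simp
  qed
  have gin: "g d u \<in> S (tpath F u d) \<inter> K" if "0 \<le> u" "u < M" for u d
    using ptin[OF that, of d] that unfolding g_def by simp
  have conv: "(\<lambda>d. g d u) \<longlonglongrightarrow> f u" for u
  proof (cases "0 \<le> u \<and> u < M")
    case True
    have "Cauchy (\<lambda>d. g d u)"
    proof (rule metric_CauchyI)
      fix e :: real assume "0 < e"
      then obtain D where D: "\<forall>w. length w = D \<longrightarrow> (\<forall>x\<in>S w. \<forall>y\<in>S w. dist x y < e)"
        using small by blast
      have "dist (g m u) (g n u) < e" if "m \<ge> D" "n \<ge> D" for m n
      proof -
        have "g m u \<in> S (tpath F u D)" using gin[of u m] True sub[OF that(1)] by blast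
        moreover have "g n u \<in> S (tpath F u D)" using gin[of u n] True sub[OF that(2)] by blast
        moreover have "length (tpath F u D) = D" by simp
        ultimately show ?thesis using D by blast
      qed
      then show "\<exists>M. \<forall>m\<ge>M. \<forall>n\<ge>M. dist (g m u) (g n u) < e" by blast
    qed
    then have "convergent (\<lambda>d. g d u)" by (rule Cauchy_convergent)
    then obtain L where L: "(\<lambda>d. g d u) \<longlonglongrightarrow> L" unfolding convergent_def by blast
    then have "f u = L" unfolding f_def by (rule limI)
    then show ?thesis using L by simp
  next
    case False
    then have "g d u = undefined" for d unfolding g_def by auto
    then have L: "(\<lambda>d. g d u) \<longlonglongrightarrow> undefined" by simp
    then have "f u = undefined" unfolding f_def by (rule limI)
    then show ?thesis using L by simp
  qed
  have fK: "f u \<in> K" if "0 \<le> u" "u < M" for u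
  proof (rule closed_sequentially[OF K _ conv[of u]])
    show "g n u \<in> K" for n using gin[OF that, of n] by blast
  qed
  have fSc: "f u \<in> Sc (tpath F u d)" if "0 \<le> u" "u < M" for u d
  proof -
    have "(\<lambda>j. g (j + d) u) \<longlonglongrightarrow> f u" using LIMSEQ_ignore_initial_segment[OF conv] .
    moreover have "g (j + d) u \<in> Sc (tpath F u d)" for j
    proof -
      have "g (j + d) u \<in> S (tpath F u (j + d))" using gin[OF that, of "j+d"] by blast
      also have "\<dots> \<subseteq> S (tpath F u d)" by (rule sub) simp
      also have "\<dots> \<subseteq> Sc (tpath F u d)" by (rule Sc)
      finally show ?thesis .
    qed
    ultimately show ?thesis using closed_sequentially[OF Scc, of "\<lambda>j. g (j + d) u"] by blast
  qed
  note pm = tpath_meas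
  have gm: "g d \<in> borel_measurable borel" for d
  proof -
    have "pt \<in> count_space UNIV \<rightarrow>\<^sub>M borel" unfolding measurable_count_space_eq1 by simp
    then have m1: "(\<lambda>u. pt (tpath F u d)) \<in> borel_measurable borel"
      by (rule measurable_compose[OF tpath_meas])
    have m2: "(\<lambda>u::real. undefined :: 'a) \<in> borel_measurable borel" by (rule measurable_const) simp
    have "(\<lambda>u. if u \<in> {0..<M} then pt (tpath F u d) else undefined) \<in> borel_measurable borel"
      by (rule measurable_If_set[OF m1 m2]) simp
    moreover have "g d = (\<lambda>u. if u \<in> {0..<M} then pt (tpath F u d) else undefined)"
      unfolding g_def by (intro ext) simp
    ultimately show ?thesis by simp
  qed
  have fm: "f \<in> borel_measurable borel"
    by (rule borel_measurable_LIMSEQ_metric[OF gm conv])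
  define \<mu> where "\<mu> = distr (restrict_space lborel {0..<M}) borel f"
  have fm2: "f \<in> restrict_space lborel {0..<M} \<rightarrow>\<^sub>M borel"
    by (rule measurable_restrict_space1) (simp add: measurable_lborel2 fm)
  have em: "emeasure \<mu> A = emeasure lborel (f -` A \<inter> {0..<M})" if "A \<in> sets borel" for A
  proof -
    have "emeasure \<mu> A = emeasure (restrict_space lborel {0..<M}) (f -` A \<inter> {0..<M})"
      unfolding \<mu>_def using that fm2 by (simp add: emeasure_distr space_restrict_space)
    also have "\<dots> = emeasure lborel (f -` A \<inter> {0..<M})"
      by (rule emeasure_restrict_space) auto
    finally show ?thesis .
  qed
  have M0: "0 \<le> M" using F0 M_def by simp
  have "emeasure \<mu> K = ennreal (F [])"
  proof -
    have "f -` K \<inter> {0..<M} = {0..<M}" using fK by auto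
    then show ?thesis using em[of K] K M0 M_def by (simp add: emeasure_lborel_Ico)
  qed
  moreover have "emeasure \<mu> A \<le> ennreal (\<Sum>w\<in>{w. length w = d \<and> Sc w \<inter> A \<noteq> {}}. F w)"
    if A: "A \<in> sets borel" for A d
  proof -
    define W where "W = {w. length w = d \<and> Sc w \<inter> A \<noteq> {}}"
    have finW: "finite W"
      using finite_lists_length_eq[of "UNIV :: bool set" d] unfolding W_def
      by (rule rev_finite_subset) auto
    have "f -` A \<inter> {0..<M} \<subseteq> (\<Union>w\<in>W. {talpha F w..<talpha F w + tnu F w})"
    proof
      fix u assume u: "u \<in> f -` A \<inter> {0..<M}"
      then have "tpath F u d \<in> W" using fSc[of u d] unfolding W_def by auto
      then show "u \<in> (\<Union>w\<in>W. {talpha F w..<talpha F w + tnu F w})"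
        using inI[of u d] u by auto
    qed
    then have "emeasure lborel (f -` A \<inter> {0..<M}) \<le> emeasure lborel (\<Union>w\<in>W. {talpha F w..<talpha F w + tnu F w})"
      by (intro emeasure_mono) auto
    also have "\<dots> \<le> (\<Sum>w\<in>W. emeasure lborel {talpha F w..<talpha F w + tnu F w})"
      by (rule emeasure_subadditive_finite[OF finW]) auto
    also have "\<dots> = (\<Sum>w\<in>W. ennreal (tnu F w))"
      using tnu_nonneg_le[OF F0 Fsub] by (intro sum.cong) (auto simp: emeasure_lborel_Ico)
    also have "\<dots> \<le> (\<Sum>w\<in>W. ennreal (F w))"
      using tnu_nonneg_le[OF F0 Fsub] by (intro sum_mono) (auto simp: ennreal_leI)
    also have "\<dots> = ennreal (\<Sum>w\<in>W. F w)" using F0 by (simp add: sum_ennreal)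
    finally show ?thesis using em[OF A] W_def by simp
  qed
  moreover have "sets \<mu> = sets borel" unfolding \<mu>_def by simp
  ultimately show ?thesis by blast
qed

lemma pnorm_fst: "norm (fst z) \<le> pnorm z" unfolding pnorm_def by simp
lemma pnorm_snd: "sqrt \<bar>snd z\<bar> \<le> pnorm z" unfolding pnorm_def by simp
lemma pnorm_le: "pnorm (z::'n::finite pt) \<le> norm z + 1"
proof -
  have "norm (fst z) \<le> norm z" using norm_fst_le[of "fst z" "snd z"] by simp
  moreover have "sqrt \<bar>snd z\<bar> \<le> norm z + 1"
  proof -
    have h: "\<bar>snd z\<bar> \<le> (\<bar>snd z\<bar> + 1)^2"
      using zero_le_square[of "\<bar>snd z\<bar>"] by (simp add: power2_eq_square algebra_simps)
    have "sqrt \<bar>snd z\<bar> \<le> sqrt ((\<bar>snd z\<bar> + 1)^2)" using h by (rule real_sqrt_le_mono)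
    then have "sqrt \<bar>snd z\<bar> \<le> \<bar>snd z\<bar> + 1" by simp
    also have "\<bar>snd z\<bar> \<le> norm z" using norm_snd_le[of "snd z" "fst z"] by simp
    finally show ?thesis by simp
  qed
  ultimately show ?thesis unfolding pnorm_def by simp
qed

lemma pdist_comp: "\<bar>fst p $ i - fst q $ i\<bar> \<le> pdist p q"
proof -
  have "\<bar>(fst p - fst q) $ i\<bar> \<le> norm (fst p - fst q)" by (rule component_le_norm_cart)
  then show ?thesis unfolding pdist_def using pnorm_fst[of "p - q"] by simp
qed

lemma pdist_time: "\<bar>snd p - snd q\<bar> \<le> (pdist p q)^2"
proof -
  have "sqrt \<bar>snd p - snd q\<bar> \<le> pdist p q" unfolding pdist_def using pnorm_snd[of "p - q"] by simp
  then show ?thesis by (metis abs_ge_zero real_le_rsqrt sqrt_le_D)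
qed

lemma pdist_nonneg: "0 \<le> pdist p q" unfolding pdist_def pnorm_def by (simp add: le_max_iff_disj)

lemma pdist_self: "pdist p p = 0" unfolding pdist_def pnorm_def by simp

lemma pdist_bdd:
  assumes "bounded (A :: 'n::finite pt set)"
  shows "bdd_above ((\<lambda>pq. pdist (fst pq) (snd pq)) ` (A \<times> A))"
proof -
  obtain B where B: "\<forall>x\<in>A. norm x \<le> B" using assms bounded_iff by blast
  have "pdist p q \<le> 2 * B + 1" if "p \<in> A" "q \<in> A" for p q
  proof -
    have "pdist p q \<le> norm (p - q) + 1" unfolding pdist_def by (rule pnorm_le)
    also have "norm (p - q) \<le> norm p + norm q" by (rule norm_triangle_ineq4)
    finally have "pdist p q \<le> norm p + norm q + 1" by simp
    moreover have "norm p \<le> B" "norm q \<le> B" using B that by auto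
    ultimately show ?thesis by simp
  qed
  then show ?thesis unfolding bdd_above_def by fastforce
qed

lemma pdiam_ge:
  assumes "bounded A" "p \<in> A" "q \<in> A"
  shows "pdist p q \<le> pdiam A"
proof -
  have "pdist (fst (p,q)) (snd (p,q)) \<le> (SUP pq\<in>A \<times> A. pdist (fst pq) (snd pq))"
    by (rule cSUP_upper[OF _ pdist_bdd[OF assms(1)]]) (use assms in auto)
  then show ?thesis unfolding pdiam_def using assms by auto
qed

lemma pdiam_le:
  assumes "\<And>p q. p \<in> A \<Longrightarrow> q \<in> A \<Longrightarrow> pdist p q \<le> c" "0 \<le> c"
  shows "pdiam A \<le> c"
proof (cases "A = {}")
  case True then show ?thesis unfolding pdiam_def using assms by simp
next
  case False
  then have "(SUP pq\<in>A \<times> A. pdist (fst pq) (snd pq)) \<le> c"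
    by (intro cSUP_least) (use assms in auto)
  then show ?thesis unfolding pdiam_def using False by simp
qed

lemma pdiam_nonneg: assumes "bounded A" shows "0 \<le> pdiam A"
proof (cases "A = {}")
  case True then show ?thesis unfolding pdiam_def by simp
next
  case False
  then obtain p where "p \<in> A" by blast
  then show ?thesis using pdiam_ge[OF assms, of p p] pdist_self[of p] by simp
qed

lemma pdiam_empty[simp]: "pdiam {} = 0" unfolding pdiam_def by simp

definition covs :: "'n::finite pt set \<Rightarrow> (nat \<Rightarrow> 'n pt set) set" where
  "covs A = {C. A \<subseteq> (\<Union>i. C i) \<and> (\<forall>i. bounded (C i))}"

definition csum :: "real \<Rightarrow> (nat \<Rightarrow> 'n::finite pt set) \<Rightarrow> ennreal" where
  "csum s C = (\<Sum>i. ennreal (pdiam (C i) powr s))"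

lemma phc_alt: "phcontent s A = (INF C\<in>covs A. csum s C)"
  unfolding phcontent_def covs_def csum_def by simp

lemma phc_le: "C \<in> covs A \<Longrightarrow> phcontent s A \<le> csum s C"
  unfolding phc_alt by (rule INF_lower)

lemma phc_mono: assumes "A \<subseteq> B" shows "phcontent s A \<le> phcontent s B"
  unfolding phc_alt by (rule INF_superset_mono) (use assms in \<open>auto simp: covs_def\<close>)

lemma phc_single:
  assumes "bounded B" "A \<subseteq> B"
  shows "phcontent s A \<le> ennreal (pdiam B powr s)"
proof -
  define C where "C i = (if i = 0 then B else {})" for i :: nat
  have "C \<in> covs A" unfolding covs_def C_def using assms by auto
  moreover have "csum s C = ennreal (pdiam B powr s)"
  proof -
    have "csum s C = (\<Sum>i\<in>{0}. ennreal (pdiam (C i) powr s))"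
      unfolding csum_def by (rule suminf_finite) (auto simp: C_def)
    then show ?thesis by (simp add: C_def)
  qed
  ultimately show ?thesis using phc_le by metis
qed

lemma phc_empty[simp]: "phcontent s {} = 0"
  using phc_single[of "{}" "{}" s] by simp

lemma suminf_interleave:
  fixes f g :: "nat \<Rightarrow> ennreal"
  shows "(\<Sum>i. if even i then f (i div 2) else g (i div 2)) = (\<Sum>i. f i) + (\<Sum>i. g i)"
proof -
  define h where "h i = (if even i then f (i div 2) else g (i div 2))" for i
  have "h sums (suminf h)" by (simp add: summable_sums)
  then have "(\<lambda>n. sum h {n*2..<n*2+2}) sums (suminf h)" by (rule sums_group) simp
  moreover have "sum h {n*2..<n*2+2} = f n + g n" for n
  proof -
    have "{n*2..<n*2+2} = {2*n, 2*n+1}" by auto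
    then show ?thesis unfolding h_def by simp
  qed
  ultimately have "(\<lambda>n. f n + g n) sums (suminf h)" by simp
  moreover have "(\<lambda>n. f n + g n) sums ((\<Sum>i. f i) + (\<Sum>i. g i))"
    by (intro sums_add summable_sums) simp_all
  ultimately show ?thesis unfolding h_def by (metis sums_unique2)
qed

lemma phc_Un: "phcontent s (A \<union> B) \<le> phcontent s A + phcontent s B"
proof (rule ennreal_le_epsilon)
  fix e :: real assume fin: "phcontent s A + phcontent s B < top" and e: "0 < e"
  have fa: "phcontent s A \<noteq> \<infinity>" and fb: "phcontent s B \<noteq> \<infinity>" using fin by auto
  have "\<exists>C\<in>covs A. csum s C < phcontent s A + ennreal (e/2)"
    by (rule INF_approx_ennreal[OF _ phc_alt fa]) (use e in simp)
  then obtain C where C: "C \<in> covs A" "csum s C < phcontent s A + ennreal (e/2)" by blast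
  have "\<exists>D\<in>covs B. csum s D < phcontent s B + ennreal (e/2)"
    by (rule INF_approx_ennreal[OF _ phc_alt fb]) (use e in simp)
  then obtain D where D: "D \<in> covs B" "csum s D < phcontent s B + ennreal (e/2)" by blast
  define E where "E i = (if even i then C (i div 2) else D (i div 2))" for i
  have "E \<in> covs (A \<union> B)"
  proof -
    have "A \<subseteq> (\<Union>i. E i)"
    proof
      fix x assume "x \<in> A"
      then obtain i where "x \<in> C i" using C(1) unfolding covs_def by blast
      then show "x \<in> (\<Union>i. E i)" unfolding E_def by (intro UN_I[of "2*i"]) auto
    qed
    moreover have "B \<subseteq> (\<Union>i. E i)"
    proof
      fix x assume "x \<in> B"
      then obtain i where "x \<in> D i" using D(1) unfolding covs_def by blast
      then show "x \<in> (\<Union>i. E i)" unfolding E_def by (intro UN_I[of "2*i+1"]) auto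
    qed
    moreover have "bounded (E i)" for i using C(1) D(1) unfolding covs_def E_def by auto
    ultimately show ?thesis unfolding covs_def by auto
  qed
  then have "phcontent s (A \<union> B) \<le> csum s E" by (rule phc_le)
  also have "csum s E = csum s C + csum s D"
  proof -
    have "csum s E = (\<Sum>i. if even i then ennreal (pdiam (C (i div 2)) powr s) else ennreal (pdiam (D (i div 2)) powr s))"
      unfolding csum_def E_def by (intro suminf_cong) simp
    also have "\<dots> = csum s C + csum s D" unfolding csum_def by (rule suminf_interleave)
    finally show ?thesis .
  qed
  also have "\<dots> \<le> phcontent s A + ennreal (e/2) + (phcontent s B + ennreal (e/2))"
    using C(2) D(2) by (intro add_mono) auto
  also have "\<dots> = phcontent s A + phcontent s B + ennreal e"
  proof -
    have "ennreal (e/2) + ennreal (e/2) = ennreal e" using e by (simp flip: ennreal_plus)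
    then show ?thesis by (simp add: ac_simps)
  qed
  finally show "phcontent s (A \<union> B) \<le> phcontent s A + phcontent s B + ennreal e" .
qed

lemma phc_UN:
  assumes "finite W"
  shows "phcontent s (\<Union>w\<in>W. X w) \<le> (\<Sum>w\<in>W. phcontent s (X w))"
  using assms
proof (induction W rule: finite_induct)
  case empty then show ?case by simp
next
  case (insert x F)
  have "phcontent s (\<Union>w\<in>insert x F. X w) = phcontent s (X x \<union> (\<Union>w\<in>F. X w))" by simp
  also have "\<dots> \<le> phcontent s (X x) + phcontent s (\<Union>w\<in>F. X w)" by (rule phc_Un)
  also have "\<dots> \<le> phcontent s (X x) + (\<Sum>w\<in>F. phcontent s (X w))" using insert by (intro add_mono) auto
  finally show ?case using insert by simp
qed

locale boxes =
  fixes e :: "nat \<Rightarrow> 'n::finite" and L :: real and a0 :: "real^'n" and ta0 :: real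
  assumes e: "bij_betw e {..<CARD('n)} UNIV" and Lpos: "0 < L"
begin


definition sched :: "nat \<Rightarrow> 'n option" where
  "sched d = (if d mod (CARD('n) + 2) < CARD('n) then Some (e (d mod (CARD('n) + 2))) else None)"

fun lsp :: "nat \<Rightarrow> 'n \<Rightarrow> real" where
  "lsp 0 i = L"
| "lsp (Suc d) i = (if sched d = Some i then lsp d i / 2 else lsp d i)"

fun ltm :: "nat \<Rightarrow> real" where
  "ltm 0 = L^2"
| "ltm (Suc d) = (if sched d = None then ltm d / 2 else ltm d)"

lemma lsp_pos: "0 < lsp d i" using Lpos by (induction d) auto
lemma ltm_pos: "0 < ltm d" using Lpos by (induction d) auto

lemma sched_block:
  assumes "D mod (CARD('n) + 2) = 0" "j < CARD('n) + 2"
  shows "sched (D + j) = (if j < CARD('n) then Some (e j) else None)"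
proof -
  have "(D + j) mod (CARD('n) + 2) = j" using assms by (metis mod_add_left_eq mod_less plus_nat.add_0)
  then show ?thesis unfolding sched_def by simp
qed

lemma e_inj: "m < CARD('n) \<Longrightarrow> j < CARD('n) \<Longrightarrow> e m = e j \<Longrightarrow> m = j"
  using e unfolding bij_betw_def inj_on_def by auto

lemma e_surj: "\<exists>m<CARD('n). e m = i"
  using e unfolding bij_betw_def by (metis UNIV_I imageE lessThan_iff)

lemma lsp_block_aux:
  assumes D: "D mod (CARD('n) + 2) = 0"
  shows "j \<le> CARD('n) + 2 \<Longrightarrow> lsp (D + j) i = lsp D i / (if (\<exists>m<j. m < CARD('n) \<and> e m = i) then 2 else 1)"
proof (induction j)
  case 0 then show ?case by simp
next
  case (Suc j)
  have j: "j < CARD('n) + 2" using Suc.prems by simp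
  have IH: "lsp (D + j) i = lsp D i / (if (\<exists>m<j. m < CARD('n) \<and> e m = i) then 2 else 1)"
    using Suc by simp
  have s: "sched (D + j) = (if j < CARD('n) then Some (e j) else None)" by (rule sched_block[OF D j])
  have st: "lsp (D + Suc j) i = (if sched (D + j) = Some i then lsp (D + j) i / 2 else lsp (D + j) i)"
    by simp
  show ?case
  proof (cases "j < CARD('n) \<and> e j = i")
    case True
    then have c: "\<not> (\<exists>m<j. m < CARD('n) \<and> e m = i)" using e_inj by fastforce
    have c2: "\<exists>m<Suc j. m < CARD('n) \<and> e m = i" using True by blast
    have "lsp (D + j) i = lsp D i" using IH c by simp
    moreover have "sched (D + j) = Some i" using s True by simp
    ultimately show ?thesis using st c2 by simp
  next
    case False
    have c: "(\<exists>m<Suc j. m < CARD('n) \<and> e m = i) = (\<exists>m<j. m < CARD('n) \<and> e m = i)"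
      using False less_Suc_eq by auto
    have "sched (D + j) \<noteq> Some i" using s False by auto
    then have "lsp (D + Suc j) i = lsp (D + j) i" using st by simp
    then show ?thesis using IH c by simp
  qed
qed

lemma ltm_block_aux:
  assumes D: "D mod (CARD('n) + 2) = 0"
  shows "j \<le> CARD('n) + 2 \<Longrightarrow> ltm (D + j) = ltm D / 2^(j - CARD('n))"
proof (induction j)
  case 0 then show ?case by simp
next
  case (Suc j)
  have j: "j < CARD('n) + 2" using Suc.prems by simp
  have IH: "ltm (D + j) = ltm D / 2^(j - CARD('n))" using Suc by simp
  have s: "sched (D + j) = (if j < CARD('n) then Some (e j) else None)" by (rule sched_block[OF D j])
  have st: "ltm (D + Suc j) = (if sched (D + j) = None then ltm (D + j) / 2 else ltm (D + j))"
    by simp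
  show ?case
  proof (cases "j < CARD('n)")
    case True
    then have "Suc j - CARD('n) = j - CARD('n)" by simp
    then show ?thesis using IH s st True by simp
  next
    case False
    then have "Suc j - CARD('n) = Suc (j - CARD('n))" by simp
    then show ?thesis using IH s st False by simp
  qed
qed

lemma lsp_block: "lsp ((CARD('n) + 2)*k) i = L / 2^k"
proof (induction k)
  case 0 then show ?case by simp
next
  case (Suc k)
  have D: "((CARD('n) + 2)*k) mod (CARD('n) + 2) = 0" by (rule mod_mult_self1_is_0)
  have "lsp ((CARD('n) + 2)*Suc k) i = lsp ((CARD('n) + 2)*k + (CARD('n) + 2)) i" by (simp add: algebra_simps)
  also have "\<dots> = lsp ((CARD('n) + 2)*k) i / 2"
    using lsp_block_aux[OF D, of "CARD('n) + 2" i] e_surj[of i] by auto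
  finally show ?case using Suc by simp
qed

lemma ltm_block: "ltm ((CARD('n) + 2)*k) = L^2 / 4^k"
proof (induction k)
  case 0 then show ?case by simp
next
  case (Suc k)
  have D: "((CARD('n) + 2)*k) mod (CARD('n) + 2) = 0" by (rule mod_mult_self1_is_0)
  have "ltm ((CARD('n) + 2)*Suc k) = ltm ((CARD('n) + 2)*k + (CARD('n) + 2))" by (simp add: algebra_simps)
  also have "\<dots> = ltm ((CARD('n) + 2)*k) / 4"
    using ltm_block_aux[OF D, of "CARD('n) + 2"] by simp
  finally show ?case using Suc by simp
qed

fun corner :: "bool list \<Rightarrow> (real^'n) \<times> real" where
  "corner [] = (a0, ta0)"
| "corner (b#w) = (case sched (length w) of
     Some i \<Rightarrow> (fst (corner w) + (if b then lsp (Suc (length w)) i else 0) *\<^sub>R axis i 1, snd (corner w))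
   | None \<Rightarrow> (fst (corner w), snd (corner w) + (if b then ltm (Suc (length w)) else 0)))"

definition Sbox :: "bool list \<Rightarrow> 'n pt set" where
  "Sbox w = {p. (\<forall>i. fst (corner w) $ i \<le> fst p $ i \<and> fst p $ i < fst (corner w) $ i + lsp (length w) i)
     \<and> snd (corner w) \<le> snd p \<and> snd p < snd (corner w) + ltm (length w)}"

definition Cbox :: "bool list \<Rightarrow> 'n pt set" where
  "Cbox w = {p. (\<forall>i. fst (corner w) $ i \<le> fst p $ i \<and> fst p $ i \<le> fst (corner w) $ i + lsp (length w) i)
     \<and> snd (corner w) \<le> snd p \<and> snd p \<le> snd (corner w) + ltm (length w)}"

lemma corner_Some_fst:
  "sched (length w) = Some i \<Longrightarrow> fst (corner (b#w)) $ j = fst (corner w) $ j + (if j = i \<and> b then lsp (length w) i / 2 else 0)"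
  by (auto simp: axis_def)
lemma corner_Some_snd: "sched (length w) = Some i \<Longrightarrow> snd (corner (b#w)) = snd (corner w)"
  by auto
lemma lsp_Some: "sched (length w) = Some i \<Longrightarrow> lsp (Suc (length w)) j = (if j = i then lsp (length w) i / 2 else lsp (length w) j)"
  by auto
lemma ltm_Some: "sched (length w) = Some i \<Longrightarrow> ltm (Suc (length w)) = ltm (length w)"
  by auto
lemma corner_None_fst: "sched (length w) = None \<Longrightarrow> fst (corner (b#w)) = fst (corner w)"
  by auto
lemma corner_None_snd: "sched (length w) = None \<Longrightarrow> snd (corner (b#w)) = snd (corner w) + (if b then ltm (length w) / 2 else 0)"
  by auto
lemma lsp_None: "sched (length w) = None \<Longrightarrow> lsp (Suc (length w)) j = lsp (length w) j"
  by auto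
lemma ltm_None: "sched (length w) = None \<Longrightarrow> ltm (Suc (length w)) = ltm (length w) / 2"
  by auto

lemma Sbox_Some:
  assumes "sched (length w) = Some i"
  shows "p \<in> Sbox (b#w) \<longleftrightarrow> p \<in> Sbox w \<and>
     (if b then fst (corner w) $ i + lsp (length w) i / 2 \<le> fst p $ i
      else fst p $ i < fst (corner w) $ i + lsp (length w) i / 2)"
proof -
  note c1 = corner_Some_fst[OF assms, of b] and c2 = corner_Some_snd[OF assms, of b]
    and c3 = lsp_Some[OF assms] and c4 = ltm_Some[OF assms]
  have "(\<forall>j. fst (corner (b#w)) $ j \<le> fst p $ j \<and> fst p $ j < fst (corner (b#w)) $ j + lsp (length (b#w)) j)
     \<longleftrightarrow> (\<forall>j. fst (corner w) $ j \<le> fst p $ j \<and> fst p $ j < fst (corner w) $ j + lsp (length w) j) \<and>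
     (if b then fst (corner w) $ i + lsp (length w) i / 2 \<le> fst p $ i
      else fst p $ i < fst (corner w) $ i + lsp (length w) i / 2)" (is "?A \<longleftrightarrow> ?B")
  proof
    assume A: ?A
    have "fst (corner w) $ j \<le> fst p $ j \<and> fst p $ j < fst (corner w) $ j + lsp (length w) j" for j
      using A[rule_format, of j] c1[of j] c3[of j] lsp_pos[of "length w" j]
      by (cases "j = i"; cases b) (auto simp del: corner.simps lsp.simps ltm.simps)
    moreover have "(if b then fst (corner w) $ i + lsp (length w) i / 2 \<le> fst p $ i
      else fst p $ i < fst (corner w) $ i + lsp (length w) i / 2)"
      using A[rule_format, of i] c1[of i] c3[of i] by (cases b) (auto simp del: corner.simps lsp.simps ltm.simps)
    ultimately show ?B by blast
  next
    assume B: ?B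
    show ?A
    proof
      fix j
      show "fst (corner (b#w)) $ j \<le> fst p $ j \<and> fst p $ j < fst (corner (b#w)) $ j + lsp (length (b#w)) j"
      proof -
        have h: "fst (corner w) $ j \<le> fst p $ j \<and> fst p $ j < fst (corner w) $ j + lsp (length w) j" using B by blast
        have hb: "(if b then fst (corner w) $ i + lsp (length w) i / 2 \<le> fst p $ i
           else fst p $ i < fst (corner w) $ i + lsp (length w) i / 2)" using B by blast
        have hi: "fst (corner w) $ i \<le> fst p $ i \<and> fst p $ i < fst (corner w) $ i + lsp (length w) i" using B by blast
        show ?thesis using h hb hi c1[of j] c3[of j]
          by (cases "j = i"; cases b) (auto simp del: corner.simps lsp.simps ltm.simps)
      qed
    qed
  qed
  then show ?thesis unfolding Sbox_def using c2 c4 by (auto simp del: corner.simps lsp.simps ltm.simps)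
qed

lemma Sbox_None:
  assumes "sched (length w) = None"
  shows "p \<in> Sbox (b#w) \<longleftrightarrow> p \<in> Sbox w \<and>
     (if b then snd (corner w) + ltm (length w) / 2 \<le> snd p
      else snd p < snd (corner w) + ltm (length w) / 2)"
proof -
  note c1 = corner_None_fst[OF assms, of b] and c2 = corner_None_snd[OF assms, of b]
    and c3 = lsp_None[OF assms] and c4 = ltm_None[OF assms]
  show ?thesis unfolding Sbox_def using c1 c2 c3 c4 ltm_pos[of "length w"]
    by (cases b) (auto simp del: corner.simps lsp.simps ltm.simps)
qed

lemma Sbox_None_F: "sched (length w) = None \<Longrightarrow> p \<in> Sbox (False#w) \<longleftrightarrow> p \<in> Sbox w \<and> snd p < snd (corner w) + ltm (length w) / 2"
  using Sbox_None[of w p False] by simp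
lemma Sbox_None_T: "sched (length w) = None \<Longrightarrow> p \<in> Sbox (True#w) \<longleftrightarrow> p \<in> Sbox w \<and> snd (corner w) + ltm (length w) / 2 \<le> snd p"
  using Sbox_None[of w p True] by simp
lemma Sbox_Some_F: "sched (length w) = Some i \<Longrightarrow> p \<in> Sbox (False#w) \<longleftrightarrow> p \<in> Sbox w \<and> fst p $ i < fst (corner w) $ i + lsp (length w) i / 2"
  using Sbox_Some[of w i p False] by simp
lemma Sbox_Some_T: "sched (length w) = Some i \<Longrightarrow> p \<in> Sbox (True#w) \<longleftrightarrow> p \<in> Sbox w \<and> fst (corner w) $ i + lsp (length w) i / 2 \<le> fst p $ i"
  using Sbox_Some[of w i p True] by simp

lemma Sbox_sub: "Sbox (b#w) \<subseteq> Sbox w"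
proof
  fix p assume p: "p \<in> Sbox (b#w)"
  show "p \<in> Sbox w"
  proof (cases "sched (length w)")
    case None then show ?thesis using Sbox_None[OF None, of p b] p by blast
  next
    case (Some i) then show ?thesis using Sbox_Some[OF Some, of p b] p by blast
  qed
qed

lemma Sbox_split: "Sbox w \<subseteq> Sbox (False#w) \<union> Sbox (True#w)"
proof
  fix p assume p: "p \<in> Sbox w"
  show "p \<in> Sbox (False#w) \<union> Sbox (True#w)"
  proof (cases "sched (length w)")
    case None then show ?thesis using Sbox_None_F[OF None, of p] Sbox_None_T[OF None, of p] p by (metis UnI1 UnI2 not_less)
  next
    case (Some i) then show ?thesis using Sbox_Some_F[OF Some, of p] Sbox_Some_T[OF Some, of p] p by (metis UnI1 UnI2 not_less)
  qed
qed

lemma Sbox_halves: "Sbox (False#w) \<inter> Sbox (True#w) = {}"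
proof -
  have "p \<notin> Sbox (False#w) \<or> p \<notin> Sbox (True#w)" for p
  proof (cases "sched (length w)")
    case None then show ?thesis using Sbox_None_F[OF None, of p] Sbox_None_T[OF None, of p] by (metis not_less)
  next
    case (Some i) then show ?thesis using Sbox_Some_F[OF Some, of p] Sbox_Some_T[OF Some, of p] by (metis not_less)
  qed
  then show ?thesis by blast
qed

lemma Sbox_disj: "length w = length w' \<Longrightarrow> w \<noteq> w' \<Longrightarrow> Sbox w \<inter> Sbox w' = {}"
proof (induction w arbitrary: w')
  case Nil then show ?case by simp
next
  case (Cons b v)
  then obtain b' v' where w': "w' = b' # v'" by (cases w') auto
  show ?case
  proof (cases "v = v'")
    case True
    then have "b \<noteq> b'" using Cons w' by simp
    then show ?thesis using Sbox_halves[of v] True w' by (cases b) (auto simp: Int_commute)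
  next
    case False
    then have "Sbox v \<inter> Sbox v' = {}" using Cons w' by simp
    then show ?thesis using Sbox_sub[of b v] Sbox_sub[of b' v'] w' by blast
  qed
qed

lemma corner_in: "corner w \<in> Sbox w"
  unfolding Sbox_def using lsp_pos[of "length w"] ltm_pos[of "length w"] by (simp del: corner.simps lsp.simps ltm.simps)

lemma Sbox_Cbox: "Sbox w \<subseteq> Cbox w"
  unfolding Sbox_def Cbox_def by (auto simp del: corner.simps lsp.simps ltm.simps intro: less_imp_le)

lemma Cbox_closed: "closed (Cbox w)"
proof -
  define c where "c = fst (corner w)"
  define X where "X = {x::real^'n. \<forall>i. c $ i \<le> x $ i \<and> x $ i \<le> c $ i + lsp (length w) i}"
  have "Cbox w = X \<times> {snd (corner w)..snd (corner w) + ltm (length w)}"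
    unfolding Cbox_def X_def c_def by (auto simp: mem_Times_iff simp del: corner.simps lsp.simps ltm.simps)
  moreover have "closed X" unfolding X_def
    by (intro closed_Collect_all closed_Collect_conj closed_halfspace_component_le_cart closed_halfspace_component_ge_cart)
  ultimately show ?thesis by (simp add: closed_Times)
qed

lemma corner_grid:
  "(\<forall>i. \<exists>m::nat. fst (corner w) $ i = a0 $ i + real m * lsp (length w) i) \<and>
   (\<exists>m::nat. snd (corner w) = ta0 + real m * ltm (length w))"
proof (induction w)
  case Nil
  have "fst (corner []) $ i = a0 $ i + real (0::nat) * lsp (length []) i" for i by simp
  moreover have "snd (corner []) = ta0 + real (0::nat) * ltm (length [])" by simp
  ultimately show ?case by blast
next
  case (Cons b w)
  have len: "length (b#w) = Suc (length w)" by simp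
  show ?case
  proof (cases "sched (length w)")
    case None
    note c1 = corner_None_fst[OF None, of b] and c2 = corner_None_snd[OF None, of b]
    and c3 = lsp_None[OF None] and c4 = ltm_None[OF None]
    obtain m where m: "snd (corner w) = ta0 + real m * ltm (length w)" using Cons by blast
    have "snd (corner (b#w)) = ta0 + real (2*m + (if b then 1 else 0)) * ltm (length (b#w))"
      unfolding len c4 c2 m by (cases b) (simp_all add: algebra_simps del: corner.simps ltm.simps lsp.simps)
    moreover have "\<exists>m::nat. fst (corner (b#w)) $ i = a0 $ i + real m * lsp (length (b#w)) i" for i
      unfolding len c1 c3 using Cons by blast
    ultimately show ?thesis by blast
  next
    case (Some i)
    note c1 = corner_Some_fst[OF Some, of b] and c2 = corner_Some_snd[OF Some, of b]
    and c3 = lsp_Some[OF Some] and c4 = ltm_Some[OF Some]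
    have t: "\<exists>m::nat. snd (corner (b#w)) = ta0 + real m * ltm (length (b#w))"
      unfolding len c2 c4 using Cons by blast
    have "\<exists>m::nat. fst (corner (b#w)) $ j = a0 $ j + real m * lsp (length (b#w)) j" for j
    proof (cases "j = i")
      case True
      obtain m where m: "fst (corner w) $ i = a0 $ i + real m * lsp (length w) i" using Cons by blast
      have "fst (corner (b#w)) $ j = a0 $ j + real (2*m + (if b then 1 else 0)) * lsp (length (b#w)) j"
        unfolding len c1 c3 using m True by (cases b) (simp_all add: algebra_simps del: corner.simps ltm.simps lsp.simps)
      then show ?thesis by blast
    next
      case False
      then show ?thesis unfolding len c1 c3 using Cons by (simp del: corner.simps ltm.simps lsp.simps)
    qed
    then show ?thesis using t by blast
  qed
qed

lemma Sbox_cover: "Sbox [] \<subseteq> (\<Union>w\<in>{w. length w = D}. Sbox w)"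
proof (induction D)
  case 0 then show ?case by auto
next
  case (Suc D)
  show ?case
  proof
    fix p assume "p \<in> Sbox []"
    then obtain w where w: "length w = D" "p \<in> Sbox w" using Suc by blast
    then obtain b where b: "p \<in> Sbox (b#w)" using Sbox_split by blast
    have "length (b#w) = Suc D" using w by simp
    then show "p \<in> (\<Union>w\<in>{w. length w = Suc D}. Sbox w)" using b by blast
  qed
qed

end

lemma nat_range_card:
  assumes c: "0 \<le> c"
  shows "finite {m::nat. lo \<le> real m \<and> real m \<le> lo + c}"
    "real (card {m::nat. lo \<le> real m \<and> real m \<le> lo + c}) \<le> c + 1"
proof -
  define a where "a = nat \<lceil>lo\<rceil>"
  define f where "f = nat \<lfloor>c\<rfloor>"
  have sub: "{m::nat. lo \<le> real m \<and> real m \<le> lo + c} \<subseteq> {a..a+f}"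
  proof
    fix m assume "m \<in> {m::nat. lo \<le> real m \<and> real m \<le> lo + c}"
    then have m: "lo \<le> real m" "real m \<le> lo + c" by auto
    have c1: "\<lceil>lo\<rceil> \<le> int m" using m(1) by (simp add: ceiling_le_iff)
    have c3: "real_of_int \<lceil>lo\<rceil> \<ge> lo" by (rule le_of_int_ceiling)
    have "real m - real_of_int \<lceil>lo\<rceil> \<le> c" using m(2) c3 by linarith
    then have "int m - \<lceil>lo\<rceil> \<le> \<lfloor>c\<rfloor>" by (simp add: le_floor_iff)
    moreover have "0 \<le> \<lfloor>c\<rfloor>" using c by simp
    ultimately have "m \<le> a + f" unfolding a_def f_def using c1 by linarith
    moreover have "a \<le> m" unfolding a_def using c1 by linarith
    ultimately show "m \<in> {a..a+f}" by simp
  qed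
  show "finite {m::nat. lo \<le> real m \<and> real m \<le> lo + c}" using sub by (rule finite_subset) simp
  have "card {m::nat. lo \<le> real m \<and> real m \<le> lo + c} \<le> card {a..a+f}" by (rule card_mono[OF _ sub]) simp
  also have "card {a..a+f} = f + 1" by simp
  finally have "real (card {m::nat. lo \<le> real m \<and> real m \<le> lo + c}) \<le> real f + 1" by linarith
  moreover have "real f \<le> c" unfolding f_def using c by simp
  ultimately show "real (card {m::nat. lo \<le> real m \<and> real m \<le> lo + c}) \<le> c + 1" by linarith
qed

context boxes begin

lemma Sbox_root: "Sbox w \<subseteq> Sbox []"
  using S_suffix[of Sbox w "[]", OF Sbox_sub] by simp

lemma Cbox_pdist:
  assumes "length w = (CARD('n) + 2)*k" "p \<in> Cbox w" "q \<in> Cbox w"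
  shows "pdist p q \<le> real CARD('n) * (L / 2^k)"
proof -
  have ls: "lsp (length w) i = L / 2^k" for i using assms(1) lsp_block by simp
  have four: "(4::real)^k = 2^k * 2^k" using power_mult_distrib[of "2::real" 2 k] by simp
  have lt: "ltm (length w) = (L / 2^k)^2" using assms(1) ltm_block[of k] four by (simp add: power_divide power2_eq_square del: ltm.simps)
  have comp: "\<bar>(fst p - fst q) $ i\<bar> \<le> L / 2^k" for i
  proof -
    have "fst (corner w) $ i \<le> fst p $ i \<and> fst p $ i \<le> fst (corner w) $ i + lsp (length w) i"
      using assms(2) unfolding Cbox_def by (force simp del: corner.simps lsp.simps ltm.simps)
    moreover have "fst (corner w) $ i \<le> fst q $ i \<and> fst q $ i \<le> fst (corner w) $ i + lsp (length w) i"
      using assms(3) unfolding Cbox_def by (force simp del: corner.simps lsp.simps ltm.simps)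
    ultimately show ?thesis using ls[of i] by (simp add: abs_le_iff del: corner.simps lsp.simps ltm.simps)
  qed
  have "norm (fst p - fst q) \<le> (\<Sum>i\<in>UNIV. \<bar>(fst p - fst q) $ i\<bar>)" by (rule norm_le_l1_cart)
  also have "\<dots> \<le> of_nat (card (UNIV::'n set)) * (L / 2^k)" by (rule sum_bounded_above) (rule comp)
  finally have n1: "norm (fst p - fst q) \<le> real CARD('n) * (L / 2^k)" by simp
  have "\<bar>snd p - snd q\<bar> \<le> (L / 2^k)^2"
    using assms(2,3) lt unfolding Cbox_def by (auto simp del: corner.simps lsp.simps ltm.simps)
  then have "sqrt \<bar>snd p - snd q\<bar> \<le> L / 2^k" using Lpos by (simp add: real_sqrt_le_iff real_le_lsqrt)
  also have "\<dots> \<le> real CARD('n) * (L / 2^k)"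
  proof -
    have "1 \<le> real CARD('n)" using finite_UNIV_card_ge_0[where 'a='n] by simp
    moreover have "0 \<le> L / 2^k" using Lpos by simp
    ultimately show ?thesis using mult_right_mono[of 1 "real CARD('n)" "L / 2^k"] by simp
  qed
  finally have n2: "sqrt \<bar>snd p - snd q\<bar> \<le> real CARD('n) * (L / 2^k)" .
  show ?thesis unfolding pdist_def pnorm_def using n1 n2 by simp
qed

lemma Sbox_dist:
  assumes "length w = (CARD('n) + 2)*k" "p \<in> Sbox w" "q \<in> Sbox w"
  shows "dist p q \<le> real CARD('n) * (L / 2^k) + (L / 2^k)^2"
proof -
  have ls: "lsp (length w) i = L / 2^k" for i using assms(1) lsp_block by simp
  have four: "(4::real)^k = 2^k * 2^k" using power_mult_distrib[of "2::real" 2 k] by simp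
  have lt: "ltm (length w) = (L / 2^k)^2" using assms(1) ltm_block[of k] four by (simp add: power_divide power2_eq_square del: ltm.simps)
  have comp: "\<bar>(fst p - fst q) $ i\<bar> \<le> L / 2^k" for i
  proof -
    have "fst (corner w) $ i \<le> fst p $ i \<and> fst p $ i < fst (corner w) $ i + lsp (length w) i"
      using assms(2) unfolding Sbox_def by (force simp del: corner.simps lsp.simps ltm.simps)
    moreover have "fst (corner w) $ i \<le> fst q $ i \<and> fst q $ i < fst (corner w) $ i + lsp (length w) i"
      using assms(3) unfolding Sbox_def by (force simp del: corner.simps lsp.simps ltm.simps)
    ultimately show ?thesis using ls[of i] by (simp add: abs_le_iff del: corner.simps lsp.simps ltm.simps)
  qed
  have "norm (fst p - fst q) \<le> (\<Sum>i\<in>UNIV. \<bar>(fst p - fst q) $ i\<bar>)" by (rule norm_le_l1_cart)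
  also have "\<dots> \<le> of_nat (card (UNIV::'n set)) * (L / 2^k)" by (rule sum_bounded_above) (rule comp)
  finally have n1: "norm (fst p - fst q) \<le> real CARD('n) * (L / 2^k)" by simp
  have n2: "\<bar>snd p - snd q\<bar> \<le> (L / 2^k)^2"
    using assms(2,3) lt unfolding Sbox_def by (auto simp del: corner.simps lsp.simps ltm.simps)
  have "dist p q = norm (fst p - fst q, snd p - snd q)"
    by (metis dist_norm fst_diff prod.collapse snd_diff)
  also have "\<dots> \<le> norm (fst p - fst q) + norm (snd p - snd q)" by (rule norm_Pair_le)
  finally show ?thesis using n1 n2 by simp
qed

lemma Sbox_small:
  assumes "0 < \<epsilon>"
  shows "\<exists>D. \<forall>w. length w = D \<longrightarrow> (\<forall>x\<in>Sbox w. \<forall>y\<in>Sbox w. dist x y < \<epsilon>)"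
proof -
  define B where "B = real CARD('n) * L + L^2"
  have B: "0 < B" unfolding B_def using Lpos by (simp add: add_pos_nonneg)
  have "\<exists>k. (1/2::real)^k < \<epsilon> / B" by (rule real_arch_pow_inv) (use assms B in auto)
  then obtain k where k: "(1/2::real)^k < \<epsilon> / B" by blast
  define h where "h = L / 2^k"
  have p2: "(1::real) \<le> 2^k" by simp
  have "h^2 = L^2 / (2^k * 2^k)" unfolding h_def by (simp add: power_divide power2_eq_square)
  also have "\<dots> \<le> L^2 / 2^k"
    by (rule divide_left_mono) (use p2 in \<open>auto simp: mult_le_cancel_left1\<close>)
  finally have h2: "h^2 \<le> L^2 / 2^k" .
  have "real CARD('n) * h + h^2 \<le> real CARD('n) * h + L^2 / 2^k" using h2 by simp
  also have "\<dots> = B * (1/2)^k" unfolding B_def h_def by (simp add: power_one_over field_simps)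
  also have "\<dots> < B * (\<epsilon> / B)" using k B by (intro mult_strict_left_mono) auto
  also have "\<dots> = \<epsilon>" using B by simp
  finally have lt: "real CARD('n) * h + h^2 < \<epsilon>" .
  have "\<forall>w. length w = (CARD('n) + 2)*k \<longrightarrow> (\<forall>x\<in>Sbox w. \<forall>y\<in>Sbox w. dist x y < \<epsilon>)"
  proof (intro allI impI ballI)
    fix w x y assume "length w = (CARD('n) + 2)*k" "x \<in> Sbox w" "y \<in> Sbox w"
    then have "dist x y \<le> real CARD('n) * h + h^2" unfolding h_def by (rule Sbox_dist)
    then show "dist x y < \<epsilon>" using lt by linarith
  qed
  then show ?thesis by blast
qed

lemma corner_inj:
  assumes "length w = length w'" "corner w = corner w'"
  shows "w = w'"
proof (rule ccontr)
  assume "w \<noteq> w'"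
  then have "Sbox w \<inter> Sbox w' = {}" using Sbox_disj assms(1) by blast
  moreover have "Sbox w = Sbox w'" unfolding Sbox_def using assms by (simp del: corner.simps)
  ultimately show False using corner_in[of w] by blast
qed

lemma count_boxes:
  assumes W: "W \<subseteq> {w. length w = D}"
    and grid: "\<And>w. w \<in> W \<Longrightarrow> (\<forall>i. \<exists>m\<in>R i. fst (corner w) $ i = a0 $ i + real m * lsp D i) \<and>
                 (\<exists>m\<in>Rt. snd (corner w) = ta0 + real m * ltm D)"
    and fin: "\<And>i. finite (R i)" "finite Rt"
  shows "card W \<le> (\<Prod>i\<in>UNIV. card (R i)) * card Rt"
proof -
  define g where "g mm = ((\<chi> i. a0 $ i + real (fst mm i) * lsp D i), ta0 + real (snd mm) * ltm D)"
    for mm :: "('n \<Rightarrow> nat) \<times> nat"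
  have "corner ` W \<subseteq> g ` (PiE UNIV R \<times> Rt)"
  proof
    fix x assume "x \<in> corner ` W"
    then obtain w where w: "w \<in> W" "x = corner w" by blast
    obtain f where f: "\<forall>i. f i \<in> R i \<and> fst (corner w) $ i = a0 $ i + real (f i) * lsp D i"
      using grid[OF w(1)] by metis
    obtain mt where mt: "mt \<in> Rt" "snd (corner w) = ta0 + real mt * ltm D" using grid[OF w(1)] by blast
    have "f \<in> PiE UNIV R" using f by auto
    moreover have "corner w = g (f, mt)" unfolding g_def using f mt
      by (simp add: prod_eq_iff vec_eq_iff del: corner.simps)
    ultimately show "x \<in> g ` (PiE UNIV R \<times> Rt)" using w mt by blast
  qed
  moreover have "inj_on corner W" using W corner_inj unfolding inj_on_def by auto
  moreover have "finite (PiE UNIV R \<times> Rt)" using fin by (simp add: finite_PiE)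
  ultimately have "card W \<le> card (PiE UNIV R \<times> Rt)"
    by (metis card_image card_image_le card_mono finite_imageI order_trans)
  also have "\<dots> = (\<Prod>i\<in>UNIV. card (R i)) * card Rt" by (simp add: card_cartesian_product card_PiE)
  finally show ?thesis .
qed

end

context boxes begin

lemma bounded_Cbox: "bounded (Cbox w)"
proof -
  define c where "c = fst (corner w)"
  define R where "R = (\<Sum>i\<in>UNIV. lsp (length w) i)"
  define X where "X = {x::real^'n. \<forall>i. c $ i \<le> x $ i \<and> x $ i \<le> c $ i + lsp (length w) i}"
  have "Cbox w = X \<times> {snd (corner w)..snd (corner w) + ltm (length w)}"
    unfolding Cbox_def X_def c_def by (auto simp: mem_Times_iff simp del: corner.simps lsp.simps ltm.simps)
  moreover have "X \<subseteq> cball c R"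
  proof
    fix x assume x: "x \<in> X"
    have "norm (x - c) \<le> (\<Sum>i\<in>UNIV. \<bar>(x - c) $ i\<bar>)" by (rule norm_le_l1_cart)
    also have "\<dots> \<le> R" unfolding R_def
    proof (rule sum_mono)
      fix i
      have "c $ i \<le> x $ i \<and> x $ i \<le> c $ i + lsp (length w) i" using x unfolding X_def by blast
      then show "\<bar>(x - c) $ i\<bar> \<le> lsp (length w) i" by simp
    qed
    finally show "x \<in> cball c R" by (simp add: dist_norm norm_minus_commute)
  qed
  then have "bounded X" using bounded_cball bounded_subset by blast
  ultimately show ?thesis by (simp add: bounded_Times)
qed

lemma pdiam_Cbox:
  assumes "length w = (CARD('n) + 2)*k"
  shows "pdiam (Cbox w) \<le> real CARD('n) * (L / 2^k)"
  by (rule pdiam_le) (use Cbox_pdist[OF assms] Lpos in auto)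

lemma meet_count:
  fixes k :: nat and d :: real
  assumes A: "bounded A" "A \<noteq> {}" "pdiam A \<le> d" "0 \<le> d"
  defines "l \<equiv> L / 2^k"
  shows "real (card {w. length w = (CARD('n)+2)*k \<and> Cbox w \<inter> A \<noteq> {}})
           \<le> (2*d/l + 2)^CARD('n) * (2*d^2/l^2 + 2)"
proof -
  define D where "D = (CARD('n)+2)*k"
  define W where "W = {w. length w = D \<and> Cbox w \<inter> A \<noteq> {}}"
  have l: "0 < l" unfolding l_def using Lpos by simp
  have ls: "lsp D i = l" for i unfolding D_def l_def by (rule lsp_block)
  have four: "(4::real)^k = 2^k * 2^k" using power_mult_distrib[of "2::real" 2 k] by simp
  have lt: "ltm D = l^2" unfolding D_def l_def using ltm_block[of k] four
    by (simp add: power_divide power2_eq_square del: ltm.simps)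
  obtain q0 where q0: "q0 \<in> A" using A(2) by blast
  define lo where "lo i = (fst q0 $ i - d - l - a0 $ i) / l" for i
  define lot where "lot = (snd q0 - d^2 - l^2 - ta0) / l^2"
  define R where "R i = {m::nat. lo i \<le> real m \<and> real m \<le> lo i + (2*d/l + 1)}" for i
  define Rt where "Rt = {m::nat. lot \<le> real m \<and> real m \<le> lot + (2*d^2/l^2 + 1)}"
  have c0: "0 \<le> 2*d/l + 1" using A(4) l by simp
  have ct0: "0 \<le> 2*d^2/l^2 + 1" using l by simp
  have grid: "(\<forall>i. \<exists>m\<in>R i. fst (corner w) $ i = a0 $ i + real m * lsp D i) \<and>
                 (\<exists>m\<in>Rt. snd (corner w) = ta0 + real m * ltm D)" if w: "w \<in> W" for w
  proof -
    obtain q where q: "q \<in> Cbox w" "q \<in> A" using w unfolding W_def by blast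
    have lw: "length w = D" using w unfolding W_def by simp
    have pq: "pdist q q0 \<le> d" using pdiam_ge[OF A(1) q(2) q0] A(3) by linarith
    have "\<exists>m\<in>R i. fst (corner w) $ i = a0 $ i + real m * lsp D i" for i
    proof -
      obtain m :: nat where m: "fst (corner w) $ i = a0 $ i + real m * l"
        using corner_grid[of w] lw ls by metis
      have qi: "fst (corner w) $ i \<le> fst q $ i \<and> fst q $ i \<le> fst (corner w) $ i + l"
        using q(1) lw ls unfolding Cbox_def by (force simp del: corner.simps lsp.simps ltm.simps)
      have dq: "\<bar>fst q $ i - fst q0 $ i\<bar> \<le> d" using pdist_comp[of q i q0] pq by linarith
      have "fst q0 $ i - d - l - a0 $ i \<le> real m * l" using m qi dq by (simp add: abs_le_iff) 
      then have m1: "lo i \<le> real m" unfolding lo_def using l by (simp add: pos_divide_le_eq)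
      have "real m * l \<le> fst q0 $ i + d - a0 $ i" using m qi dq by (simp add: abs_le_iff)
      then have "real m \<le> (fst q0 $ i + d - a0 $ i) / l" using l by (simp add: pos_le_divide_eq)
      also have "(fst q0 $ i + d - a0 $ i) / l = lo i + (2*d/l + 1)"
        unfolding lo_def using l by (simp add: field_simps)
      finally have "m \<in> R i" using m1 unfolding R_def by simp
      then show ?thesis using m ls by metis
    qed
    moreover have "\<exists>m\<in>Rt. snd (corner w) = ta0 + real m * ltm D"
    proof -
      obtain m :: nat where m: "snd (corner w) = ta0 + real m * l^2"
        using corner_grid[of w] lw lt by metis
      have qi: "snd (corner w) \<le> snd q \<and> snd q \<le> snd (corner w) + l^2"
        using q(1) lw lt unfolding Cbox_def by (force simp del: corner.simps lsp.simps ltm.simps)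
      have "(pdist q q0)^2 \<le> d^2" using pq pdist_nonneg[of q q0] by (simp add: power_mono)
      then have dq: "\<bar>snd q - snd q0\<bar> \<le> d^2" using pdist_time[of q q0] by linarith
      have l2: "0 < l^2" using l by simp
      have "snd q0 - d^2 - l^2 - ta0 \<le> real m * l^2" using m qi dq by (simp add: abs_le_iff)
      then have m1: "lot \<le> real m" unfolding lot_def using l2 by (simp add: pos_divide_le_eq)
      have "real m * l^2 \<le> snd q0 + d^2 - ta0" using m qi dq by (simp add: abs_le_iff)
      then have "real m \<le> (snd q0 + d^2 - ta0) / l^2" using l2 by (simp add: pos_le_divide_eq)
      also have "(snd q0 + d^2 - ta0) / l^2 = lot + (2*d^2/l^2 + 1)"
        unfolding lot_def using l2 by (simp add: field_simps)
      finally have "m \<in> Rt" using m1 unfolding Rt_def by simp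
      then show ?thesis using m lt by metis
    qed
    ultimately show ?thesis by blast
  qed
  have finR: "finite (R i)" for i unfolding R_def by (rule nat_range_card(1)[OF c0])
  have finRt: "finite Rt" unfolding Rt_def by (rule nat_range_card(1)[OF ct0])
  have "card W \<le> (\<Prod>i\<in>UNIV. card (R i)) * card Rt"
    by (rule count_boxes[of W D R Rt]) (use grid finR finRt in \<open>auto simp: W_def\<close>)
  then have "real (card W) \<le> (\<Prod>i\<in>UNIV. real (card (R i))) * real (card Rt)"
    by (metis of_nat_le_iff of_nat_mult of_nat_prod)
  also have "\<dots> \<le> (\<Prod>i\<in>(UNIV::'n set). 2*d/l + 2) * (2*d^2/l^2 + 2)"
  proof (intro mult_mono prod_mono conjI)
    fix i show "0 \<le> real (card (R i))" by simp
    show "real (card (R i)) \<le> 2*d/l + 2" using nat_range_card(2)[OF c0, of "lo i"] unfolding R_def by simp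
  next
    show "real (card Rt) \<le> 2*d^2/l^2 + 2" using nat_range_card(2)[OF ct0, of lot] unfolding Rt_def by simp
  next
    show "0 \<le> (\<Prod>i\<in>(UNIV::'n set). 2*d/l + 2)" using c0 by (intro prod_nonneg) simp
  qed simp
  also have "\<dots> = (2*d/l + 2)^CARD('n) * (2*d^2/l^2 + 2)" by simp
  finally show ?thesis unfolding W_def D_def .
qed

lemma band_cover:
  "Sbox [] \<inter> {p. ta0 + L^2 - L^2/4^m \<le> snd p} \<subseteq>
     (\<Union>w\<in>{w. length w = (CARD('n)+2)*m \<and> Sbox w \<inter> {p. ta0 + L^2 - L^2/4^m \<le> snd p} \<noteq> {}}. Sbox w)"
  using Sbox_cover[of "(CARD('n)+2)*m"] by blast

lemma band_count:
  "card {w. length w = (CARD('n)+2)*m \<and> Sbox w \<inter> {p. ta0 + L^2 - L^2/4^m \<le> snd p} \<noteq> {}}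
     \<le> (2^m)^CARD('n)"
proof -
  define D where "D = (CARD('n)+2)*m"
  define W where "W = {w. length w = D \<and> Sbox w \<inter> {p. ta0 + L^2 - L^2/4^m \<le> snd p} \<noteq> {}}"
  define l where "l = L / 2^m"
  define lt where "lt = L^2 / 4^m"
  have l: "0 < l" unfolding l_def using Lpos by simp
  have lt0: "0 < lt" unfolding lt_def using Lpos by simp
  have ls: "lsp D i = l" for i unfolding D_def l_def by (rule lsp_block)
  have ltD: "ltm D = lt" unfolding D_def lt_def by (rule ltm_block)
  have Ll: "L = 2^m * l" unfolding l_def by simp
  have Llt: "L^2 = 4^m * lt" unfolding lt_def by simp
  have grid: "(\<forall>i. \<exists>mi\<in>{..<2^m}. fst (corner w) $ i = a0 $ i + real mi * lsp D i) \<and>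
                 (\<exists>mt\<in>{4^m - 1}. snd (corner w) = ta0 + real mt * ltm D)" if w: "w \<in> W" for w
  proof -
    have lw: "length w = D" using w unfolding W_def by simp
    obtain p where p: "p \<in> Sbox w" "ta0 + L^2 - lt \<le> snd p" using w unfolding W_def lt_def by blast
    have cr: "corner w \<in> Sbox []" using corner_in[of w] Sbox_root by blast
    have "\<exists>mi\<in>{..<2^m}. fst (corner w) $ i = a0 $ i + real mi * lsp D i" for i
    proof -
      obtain mi :: nat where mi: "fst (corner w) $ i = a0 $ i + real mi * l"
        using corner_grid[of w] lw ls by metis
      have "fst (corner w) $ i < a0 $ i + L" using cr unfolding Sbox_def by auto
      then have "real mi * l < real (2^m) * l" using mi Ll by simp
      then have "mi < 2^m" using l by (metis of_nat_less_iff mult_less_cancel_right_pos)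
      then show ?thesis using mi ls by auto
    qed
    moreover have "\<exists>mt\<in>{4^m - 1}. snd (corner w) = ta0 + real mt * ltm D"
    proof -
      obtain mt :: nat where mt: "snd (corner w) = ta0 + real mt * lt"
        using corner_grid[of w] lw ltD by metis
      have "snd (corner w) < ta0 + L^2" using cr unfolding Sbox_def by auto
      then have "real mt * lt < real (4^m) * lt" using mt Llt by simp
      then have a: "mt < 4^m" using lt0 by (metis of_nat_less_iff mult_less_cancel_right_pos)
      have "snd p < snd (corner w) + lt" using p(1) lw ltD unfolding Sbox_def by (auto simp del: corner.simps lsp.simps ltm.simps)
      then have "real (4^m) * lt - lt < real mt * lt + lt" using p(2) mt Llt by simp
      then have "(real (4^m)) * lt < (real mt + 2) * lt" by (simp add: algebra_simps)
      then have "real (4^m) < real mt + 2" using lt0 by (metis mult_less_cancel_right_pos)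
      then have "4^m < mt + 2" by linarith
      then have "mt = 4^m - 1" using a by linarith
      then show ?thesis using mt ltD by simp
    qed
    ultimately show ?thesis by blast
  qed
  have "card W \<le> (\<Prod>i\<in>(UNIV::'n set). card {..<(2::nat)^m}) * card {(4::nat)^m - 1}"
  proof (rule count_boxes[where D=D])
    show "W \<subseteq> {w. length w = D}" unfolding W_def by auto
  next
    fix w assume "w \<in> W"
    then show "(\<forall>i. \<exists>m\<in>{..<(2::nat)^m}. fst (corner w) $ i = a0 $ i + real m * lsp D i) \<and>
                 (\<exists>mt\<in>{(4::nat)^m - 1}. snd (corner w) = ta0 + real mt * ltm D)" using grid by blast
  qed auto
  then show ?thesis unfolding W_def D_def by simp
qed

end

context boxes begin

lemma sum_F_bound:
  fixes F :: "bool list \<Rightarrow> real"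
  assumes s: "0 < s" and Fle: "\<And>w. F w \<le> pdiam (Cbox w) powr s"
  shows "(\<Sum>w\<in>{w. length w = (CARD('n)+2)*k \<and> Cbox w \<inter> A \<noteq> {}}. F w)
     \<le> real (card {w. length w = (CARD('n)+2)*k \<and> Cbox w \<inter> A \<noteq> {}}) * (real CARD('n) * (L / 2^k)) powr s"
proof (rule sum_bounded_above)
  fix w assume "w \<in> {w. length w = (CARD('n)+2)*k \<and> Cbox w \<inter> A \<noteq> {}}"
  then have lw: "length w = (CARD('n)+2)*k" by simp
  have "F w \<le> pdiam (Cbox w) powr s" by (rule Fle)
  also have "\<dots> \<le> (real CARD('n) * (L / 2^k)) powr s"
    by (rule powr_mono2) (use s pdiam_nonneg[OF bounded_Cbox] pdiam_Cbox[OF lw] in auto)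
  finally show "F w \<le> (real CARD('n) * (L / 2^k)) powr s" .
qed

lemma upper_bound:
  fixes F :: "bool list \<Rightarrow> real" and s :: real and \<mu> :: "'n pt measure"
  assumes s: "0 < s" and Fle: "\<And>w. F w \<le> pdiam (Cbox w) powr s"
   and mb: "\<And>d'. emeasure \<mu> A \<le> ennreal (\<Sum>w\<in>{w. length w = d' \<and> Cbox w \<inter> A \<noteq> {}}. F w)"
   and A: "bounded A"
  shows "emeasure \<mu> A \<le> ennreal (((4 * real CARD('n) + 2)^CARD('n) * (8 * real CARD('n)^2 + 2)) * pdiam A powr s)"
proof -
  define n where "n = real CARD('n)"
  define C1 where "C1 = (4 * n + 2)^CARD('n) * (8 * n^2 + 2)"
  define \<delta> where "\<delta> k = n * (L / 2^k)" for k :: nat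
  define W where "W k = {w. length w = (CARD('n)+2)*k \<and> Cbox w \<inter> A \<noteq> {}}" for k
  have n1: "1 \<le> n" unfolding n_def using finite_UNIV_card_ge_0[where 'a='n] by simp
  have C1: "1 \<le> C1"
  proof -
    have "1 \<le> (4 * n + 2)^CARD('n)" using n1 by (intro one_le_power) simp
    moreover have "1 \<le> 8 * n^2 + 2" using n1 by simp
    ultimately have "1 * 1 \<le> (4 * n + 2)^CARD('n) * (8 * n^2 + 2)" by (intro mult_mono) auto
    then show ?thesis unfolding C1_def by simp
  qed
  have \<delta>pos: "0 < \<delta> k" for k unfolding \<delta>_def using n1 Lpos by simp
  have step: "emeasure \<mu> A \<le> ennreal (real (card (W k)) * \<delta> k powr s)" for k
  proof -
    have "emeasure \<mu> A \<le> ennreal (\<Sum>w\<in>W k. F w)" using mb unfolding W_def by blast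
    also have "\<dots> \<le> ennreal (real (card (W k)) * \<delta> k powr s)"
      using sum_F_bound[OF s Fle, of k A] unfolding W_def \<delta>_def n_def by (rule ennreal_leI)
    finally show ?thesis .
  qed
  show ?thesis
  proof (cases "A = {}")
    case True then show ?thesis by simp
  next
    case Ane: False
    define d where "d = pdiam A"
    have d0: "0 \<le> d" unfolding d_def by (rule pdiam_nonneg[OF A])
    have mc: "real (card (W k)) \<le> (2*d/(L/2^k) + 2)^CARD('n) * (2*d^2/(L/2^k)^2 + 2)" for k
      unfolding W_def by (rule meet_count[OF A Ane _ d0]) (simp add: d_def)
    consider "\<delta> 0 \<le> d" | "0 < d" "d < \<delta> 0" | "d = 0" using d0 \<delta>pos[of 0] by linarith
    then show ?thesis
    proof cases
      case 1
      have "W 0 \<subseteq> {[]}" unfolding W_def by auto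
      then have "card (W 0) \<le> card {[] :: bool list}" by (intro card_mono) auto
      then have "card (W 0) \<le> 1" by simp
      then have "real (card (W 0)) * \<delta> 0 powr s \<le> 1 * d powr s"
        by (intro mult_mono powr_mono2) (use s 1 \<delta>pos[of 0] in auto)
      also have "\<dots> \<le> C1 * d powr s" using C1 by (intro mult_right_mono) auto
      finally have "real (card (W 0)) * \<delta> 0 powr s \<le> C1 * d powr s" .
      then show ?thesis using step[of 0] unfolding d_def C1_def n_def by (meson ennreal_leI order_trans)
    next
      case 2
      have "\<exists>k. (1/2::real)^k < d / (n * L)" by (rule real_arch_pow_inv) (use 2 n1 Lpos in auto)
      then have ex: "\<exists>k. \<delta> k \<le> d"
        unfolding \<delta>_def using n1 Lpos by (auto simp: field_simps power_one_over intro: less_imp_le)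
      define k where "k = (LEAST k. \<delta> k \<le> d)"
      have k: "\<delta> k \<le> d" unfolding k_def by (rule LeastI_ex[OF ex])
      have k0: "k \<noteq> 0"
      proof
        assume "k = 0" then show False using k 2 by simp
      qed
      then obtain j where j: "k = Suc j" by (cases k) auto
      have "\<not> \<delta> j \<le> d" using not_less_Least[of j "\<lambda>k. \<delta> k \<le> d"] j unfolding k_def by auto
      then have dj: "d < \<delta> j" by simp
      define l where "l = L / 2^k"
      have l: "0 < l" unfolding l_def using Lpos by simp
      have "\<delta> j = 2 * (n * l)" unfolding \<delta>_def l_def j by simp
      then have dl: "d < 2 * n * l" using dj by simp
      have "2*d/l < 4*n" using dl l by (simp add: field_simps)
      then have a1: "2*d/l + 2 \<le> 4*n + 2" by simp
      have "d^2 < (2*n*l)^2" using dl d0 by (simp add: power_strict_mono)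
      then have "2*d^2/l^2 < 8*n^2" using l by (simp add: field_simps power_mult_distrib)
      then have a2: "2*d^2/l^2 + 2 \<le> 8*n^2 + 2" by simp
      have "real (card (W k)) \<le> (2*d/l + 2)^CARD('n) * (2*d^2/l^2 + 2)" using mc[of k] unfolding l_def .
      also have "\<dots> \<le> C1" unfolding C1_def
        by (intro mult_mono power_mono a1 a2) (use d0 l n1 in auto)
      finally have cw: "real (card (W k)) \<le> C1" .
      have "real (card (W k)) * \<delta> k powr s \<le> C1 * d powr s"
        by (intro mult_mono cw powr_mono2) (use s k \<delta>pos[of k] C1 in auto)
      then show ?thesis using step[of k] unfolding d_def C1_def n_def by (meson ennreal_leI order_trans)
    next
      case 3
      have "emeasure \<mu> A \<le> 0"
      proof (rule ennreal_le_epsilon)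
        fix e :: real assume e: "0 < e"
        define t where "t = (e / 2^(CARD('n)+1)) powr (1/s)"
        have t: "0 < t" unfolding t_def using e by simp
        have "\<exists>k. (1/2::real)^k < t / (n * L)" by (rule real_arch_pow_inv) (use t n1 Lpos in auto)
        then obtain k where k: "(1/2::real)^k < t / (n * L)" by blast
        have nL: "0 < n * L" using n1 Lpos by simp
        have "(1/2::real)^k * (n * L) < t" using k nL by (simp add: pos_less_divide_eq)
        moreover have "\<delta> k = (1/2::real)^k * (n * L)" unfolding \<delta>_def by (simp add: power_one_over)
        ultimately have dk: "\<delta> k < t" by simp
        have "\<delta> k powr s < t powr s" by (rule powr_less_mono2) (use s \<delta>pos[of k] dk in auto)
        also have "t powr s = e / 2^(CARD('n)+1)"
        proof -
          have "t powr s = (e / 2^(CARD('n)+1)) powr (1/s * s)" unfolding t_def by (rule powr_powr)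
          also have "1/s * s = 1" using s by simp
          finally show ?thesis using e by simp
        qed
        finally have ds: "\<delta> k powr s < e / 2^(CARD('n)+1)" .
        have "real (card (W k)) \<le> (2*d/(L/2^k) + 2)^CARD('n) * (2*d^2/(L/2^k)^2 + 2)" by (rule mc)
        also have "\<dots> = 2^CARD('n) * 2" using 3 by simp
        finally have cw: "real (card (W k)) \<le> 2^CARD('n) * 2" .
        have "real (card (W k)) * \<delta> k powr s \<le> 2^CARD('n) * 2 * (e / 2^(CARD('n)+1))"
          using cw ds by (intro mult_mono) auto
        also have "\<dots> = e" by simp
        finally have "real (card (W k)) * \<delta> k powr s \<le> e" .
        then have "ennreal (real (card (W k)) * \<delta> k powr s) \<le> ennreal e" by (rule ennreal_leI)
        then show "emeasure \<mu> A \<le> 0 + ennreal e" using step[of k] by simp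
      qed
      then have "emeasure \<mu> A = 0" by simp
      then show ?thesis by simp
    qed
  qed
qed

end

lemma core:
  fixes \<Omega> :: "'n::finite pt set" and b \<epsilon> r :: real and m :: nat and x0 :: "real^'n" and t0 :: real
  defines "s \<equiv> real CARD('n) + \<epsilon>"
  assumes \<Omega>: "open \<Omega>" and b: "0 < b" and \<epsilon>: "0 < \<epsilon>" and r: "0 < r" and m: "2 \<le> m"
    and Hcont: "phcontent s (PQminus (r/2) (x0,t0) \<inter> - \<Omega>) \<ge> ennreal (b * (r/2) powr s)"
    and Hm: "2 * (4 * real CARD('n)) powr s / b \<le> (2 powr \<epsilon>)^m"
  shows "\<exists>\<mu> :: 'n pt measure. sets \<mu> = sets borel \<and>
     emeasure \<mu> ((ball x0 r \<times> {t0 - r^2 <..< t0 - (r/2^m)^2}) \<inter> - \<Omega>) \<ge> ennreal ((b/2 * (1/2) powr s) * r powr s) \<and>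
     (\<forall>A \<in> sets borel. bounded A \<longrightarrow>
        emeasure \<mu> A \<le> ennreal (((4 * real CARD('n) + 2)^CARD('n) * (8 * real CARD('n)^2 + 2)) * pdiam A powr s))"
proof -
  have s: "0 < s" unfolding s_def using \<epsilon> by simp
  define r' where "r' = r/2"
  define L where "L = 2*r"
  define a0 :: "real^'n" where "a0 = (\<chi> i. x0 $ i - r')"
  define ta0 where "ta0 = t0 - L^2"
  define h where "h = L^2/4^m"
  have r': "0 < r'" unfolding r'_def using r by simp
  have L: "0 < L" unfolding L_def using r by simp
  have h: "0 < h" unfolding h_def using L by simp
  obtain e0 where e0: "bij_betw e0 {0..<card (UNIV::'n set)} (UNIV::'n set)"
    using ex_bij_betw_nat_finite[of "UNIV::'n set"] by auto
  have e: "bij_betw e0 {..<CARD('n)} UNIV" using e0 by (simp add: atLeast0LessThan)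
  interpret B: boxes e0 L a0 ta0 by unfold_locales (use e L in auto)
  define K where "K = (cball x0 r' \<times> {t0 - r'^2 .. t0 - h}) \<inter> - \<Omega>"
  define Band where "Band = cball x0 r' \<times> {t0 - h <..< t0}"
  have sub1: "PQminus r' (x0,t0) \<inter> - \<Omega> \<subseteq> K \<union> Band"
  proof
    fix q assume q: "q \<in> PQminus r' (x0,t0) \<inter> - \<Omega>"
    then have pq: "pdist (x0,t0) q < r'" and qt: "snd q < t0" and qO: "q \<notin> \<Omega>"
      unfolding PQminus_def PQ_def by auto
    have "norm (x0 - fst q) \<le> pdist (x0,t0) q" unfolding pdist_def using pnorm_fst[of "(x0,t0) - q"] by simp
    then have qx: "fst q \<in> cball x0 r'" using pq by (simp add: dist_norm)
    have "(pdist (x0,t0) q)^2 < r'^2" using pq pdist_nonneg[of "(x0,t0)" q] by (intro power_strict_mono) auto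
    then have "\<bar>t0 - snd q\<bar> < r'^2" using pdist_time[of "(x0,t0)" q] by simp
    then have qt2: "t0 - r'^2 \<le> snd q" by linarith
    show "q \<in> K \<union> Band"
    proof (cases "snd q \<le> t0 - h")
      case True then have "q \<in> K" unfolding K_def using qx qt2 qO by (cases q) auto
      then show ?thesis by blast
    next
      case False then have "q \<in> Band" unfolding Band_def using qx qt by (cases q) auto
      then show ?thesis by blast
    qed
  qed
  have Kclosed: "closed K" unfolding K_def using \<Omega>
    by (intro closed_Int closed_Times closed_cball closed_atLeastAtMost) (auto simp: closed_def)
  have cb: "x0 $ i - r' \<le> y $ i \<and> y $ i \<le> x0 $ i + r'" if "y \<in> cball x0 r'" for y i
  proof -
    have "\<bar>(x0 - y) $ i\<bar> \<le> norm (x0 - y)" by (rule component_le_norm_cart)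
    then show ?thesis using that by (simp add: dist_norm abs_le_iff)
  qed
  have Sroot: "q \<in> B.Sbox []" if "fst q \<in> cball x0 r'" "ta0 \<le> snd q" "snd q < t0" for q
  proof -
    have "\<forall>i. a0 $ i \<le> fst q $ i \<and> fst q $ i < a0 $ i + L"
    proof
      fix i
      have "x0 $ i - r' \<le> fst q $ i \<and> fst q $ i \<le> x0 $ i + r'" by (rule cb[OF that(1)])
      then show "a0 $ i \<le> fst q $ i \<and> fst q $ i < a0 $ i + L" unfolding a0_def L_def r'_def using r by simp
    qed
    moreover have "ta0 + L^2 = t0" unfolding ta0_def by simp
    ultimately show ?thesis unfolding B.Sbox_def using that by simp
  qed
  have h4: "h \<le> L^2"
  proof -
    have "(1::real) \<le> 4^m" by (rule one_le_power) simp
    moreover have "0 \<le> L^2" by simp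
    ultimately have "L^2 * 1 \<le> L^2 * 4^m" by (rule mult_left_mono)
    then show ?thesis unfolding h_def by (simp add: pos_divide_le_eq)
  qed
  have ta0r: "ta0 \<le> t0 - r'^2" unfolding ta0_def L_def r'_def using r by (simp add: power2_eq_square)
  have KS: "K \<subseteq> B.Sbox []"
  proof
    fix q assume "q \<in> K"
    then have "fst q \<in> cball x0 r'" "t0 - r'^2 \<le> snd q" "snd q \<le> t0 - h" unfolding K_def by (auto simp: mem_Times_iff)
    then show "q \<in> B.Sbox []" using ta0r h by (intro Sroot) auto
  qed
  have BandS: "Band \<subseteq> B.Sbox [] \<inter> {p. ta0 + L^2 - L^2/4^m \<le> snd p}"
  proof
    fix q assume "q \<in> Band"
    then have q: "fst q \<in> cball x0 r'" "t0 - h < snd q" "snd q < t0" unfolding Band_def by (auto simp: mem_Times_iff)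
    have "ta0 \<le> snd q" using q h4 unfolding ta0_def by simp
    then have "q \<in> B.Sbox []" using q by (intro Sroot) auto
    moreover have "ta0 + L^2 - L^2/4^m \<le> snd q" using q unfolding ta0_def h_def by simp
    ultimately show "q \<in> B.Sbox [] \<inter> {p. ta0 + L^2 - L^2/4^m \<le> snd p}" by blast
  qed
  define N where "N = real CARD('n)"
  have N: "1 \<le> N" unfolding N_def using finite_UNIV_card_ge_0[where 'a='n] by simp
  define c where "c = 2 powr \<epsilon>"
  have c: "1 < c" unfolding c_def using \<epsilon> by simp
  define \<delta> where "\<delta> = N * (L / 2^m)"
  have \<delta>: "0 < \<delta>" unfolding \<delta>_def using N L by simp
  define TW where "TW = {w. length w = (CARD('n)+2)*m \<and> B.Sbox w \<inter> {p. ta0 + L^2 - L^2/4^m \<le> snd p} \<noteq> {}}"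
  have finTW: "finite TW"
    using finite_lists_length_eq[of "UNIV :: bool set" "(CARD('n)+2)*m"] unfolding TW_def
    by (rule rev_finite_subset) auto
  have cardTW: "card TW \<le> (2^m)^CARD('n)" unfolding TW_def by (rule B.band_count)
  have BandU: "Band \<subseteq> (\<Union>w\<in>TW. B.Sbox w)" using BandS B.band_cover unfolding TW_def by blast
  have each: "phcontent s (B.Sbox w) \<le> ennreal (\<delta> powr s)" if "w \<in> TW" for w
  proof -
    have lw: "length w = (CARD('n)+2)*m" using that unfolding TW_def by simp
    have "phcontent s (B.Sbox w) \<le> ennreal (pdiam (B.Cbox w) powr s)"
      by (rule phc_single[OF B.bounded_Cbox B.Sbox_Cbox])
    also have "pdiam (B.Cbox w) powr s \<le> \<delta> powr s" unfolding \<delta>_def N_def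
      by (rule powr_mono2) (use s pdiam_nonneg[OF B.bounded_Cbox] B.pdiam_Cbox[OF lw] in auto)
    finally show ?thesis by (simp add: ennreal_leI)
  qed
  have "phcontent s Band \<le> phcontent s (\<Union>w\<in>TW. B.Sbox w)" by (rule phc_mono[OF BandU])
  also have "\<dots> \<le> (\<Sum>w\<in>TW. phcontent s (B.Sbox w))" by (rule phc_UN[OF finTW])
  also have "\<dots> \<le> (\<Sum>w\<in>TW. ennreal (\<delta> powr s))" by (rule sum_mono) (rule each)
  also have "\<dots> = ennreal (real (card TW) * \<delta> powr s)" by (simp add: ennreal_mult' ennreal_of_nat_eq_real_of_nat)
  also have "\<dots> \<le> ennreal ((2^m)^CARD('n) * \<delta> powr s)"
  proof -
    have "real (card TW) \<le> (2^m)^CARD('n)" using cardTW by (metis of_nat_le_iff of_nat_numeral of_nat_power)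
    then show ?thesis by (intro ennreal_leI mult_right_mono) auto
  qed
  also have "(2^m)^CARD('n) * \<delta> powr s \<le> b * r' powr s / 2"
  proof -
    have p2: "(2::real)^m = 2 powr real m" by (simp add: powr_realpow)
    have "\<delta> = (2 * N * r) / 2^m" unfolding \<delta>_def L_def by simp
    then have "\<delta> powr s = (2 * N * r) powr s / (2^m) powr s" using N r by (simp add: powr_divide)
    also have "(2^m) powr s = (2^m)^CARD('n) * c^m"
    proof -
      have "((2::real)^m) powr s = (2^m) powr N * (2^m) powr \<epsilon>" unfolding s_def N_def by (simp add: powr_add)
      also have "((2::real)^m) powr N = (2^m)^CARD('n)" unfolding N_def by (simp add: powr_realpow)
      also have "((2::real)^m) powr \<epsilon> = c^m"
      proof -
        have "((2::real)^m) powr \<epsilon> = 2 powr (real m * \<epsilon>)" unfolding p2 by (simp add: powr_powr)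
        also have "\<dots> = (2 powr \<epsilon>) powr real m" by (simp add: powr_powr mult.commute)
        also have "\<dots> = c^m" unfolding c_def by (simp add: powr_realpow)
        finally show ?thesis .
      qed
      finally show ?thesis .
    qed
    finally have ds: "(2^m)^CARD('n) * \<delta> powr s = (2 * N * r) powr s / c^m" using c by simp
    have cm: "0 < c^m" using c by simp
    have "2 * (4 * N) powr s / b \<le> c^m" using Hm unfolding N_def c_def .
    then have "1 / c^m \<le> b / (2 * (4 * N) powr s)" using cm b N
      by (simp add: field_simps)
    then have "(2 * N * r) powr s / c^m \<le> (2 * N * r) powr s * (b / (2 * (4 * N) powr s))"
      using mult_left_mono[of "1 / c^m" "b / (2 * (4 * N) powr s)" "(2 * N * r) powr s"] by simp
    also have "\<dots> = b / 2 * ((2 * N * r) powr s / (4 * N) powr s)" by (simp add: field_simps)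
    also have "(2 * N * r) powr s / (4 * N) powr s = ((2 * N * r) / (4 * N)) powr s"
      by (rule powr_divide[symmetric])
    also have "(2 * N * r) / (4 * N) = r'" unfolding r'_def using N by simp
    finally show ?thesis using ds by simp
  qed
  finally have band: "phcontent s Band \<le> ennreal (b * r' powr s / 2)" by (simp add: ennreal_leI)
  have "ennreal (b * r' powr s) \<le> phcontent s (PQminus r' (x0,t0) \<inter> - \<Omega>)"
    using Hcont unfolding r'_def .
  also have "\<dots> \<le> phcontent s (K \<union> Band)" by (rule phc_mono[OF sub1])
  also have "\<dots> \<le> phcontent s K + phcontent s Band" by (rule phc_Un)
  also have "\<dots> \<le> phcontent s K + ennreal (b * r' powr s / 2)" using band by (rule add_left_mono)
  finally have cont: "ennreal (b * r' powr s) \<le> phcontent s K + ennreal (b * r' powr s / 2)" .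
  define F where "F w = enn2real (phcontent s (K \<inter> B.Sbox w))" for w
  have fin: "phcontent s (K \<inter> B.Sbox w) \<le> ennreal (pdiam (B.Cbox w) powr s)" for w
    by (rule phc_single[OF B.bounded_Cbox]) (use B.Sbox_Cbox in blast)
  have fin2: "phcontent s (K \<inter> B.Sbox w) < top" for w
    using fin[of w] by (meson ennreal_less_top order.strict_trans1)
  have Fe: "ennreal (F w) = phcontent s (K \<inter> B.Sbox w)" for w unfolding F_def using fin2[of w] by simp
  have F0: "0 \<le> F w" for w unfolding F_def by simp
  have Fle: "F w \<le> pdiam (B.Cbox w) powr s" for w unfolding F_def by (rule enn2real_leI) (use fin in auto)
  have Fsub: "F w \<le> F (False#w) + F (True#w)" for w
  proof -
    have "K \<inter> B.Sbox w \<subseteq> (K \<inter> B.Sbox (False#w)) \<union> (K \<inter> B.Sbox (True#w))" using B.Sbox_split by blast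
    then have "ennreal (F w) \<le> phcontent s ((K \<inter> B.Sbox (False#w)) \<union> (K \<inter> B.Sbox (True#w)))"
      unfolding Fe by (rule phc_mono)
    also have "\<dots> \<le> phcontent s (K \<inter> B.Sbox (False#w)) + phcontent s (K \<inter> B.Sbox (True#w))" by (rule phc_Un)
    also have "\<dots> = ennreal (F (False#w) + F (True#w))" unfolding Fe[symmetric] using F0 by simp
    finally have h: "ennreal (F w) \<le> ennreal (F (False#w) + F (True#w))" .
    have "0 \<le> F (False#w) + F (True#w)" using F0 by (simp add: add_nonneg_nonneg)
    then show ?thesis using h ennreal_le_iff by blast
  qed
  have FK: "B.Sbox w \<inter> K \<noteq> {}" if "0 < F w" for w
  proof
    assume "B.Sbox w \<inter> K = {}"
    then have "K \<inter> B.Sbox w = {}" by blast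
    then have "F w = 0" unfolding F_def by simp
    then show False using that by simp
  qed
  obtain \<mu> :: "'n pt measure" where \<mu>: "sets \<mu> = sets borel" "emeasure \<mu> K = ennreal (F [])"
     "\<forall>A\<in>sets borel. \<forall>d. emeasure \<mu> A \<le> ennreal (\<Sum>w\<in>{w. length w = d \<and> B.Cbox w \<inter> A \<noteq> {}}. F w)"
    using tree_measure[OF Kclosed F0 Fsub FK B.Sbox_sub B.Sbox_Cbox B.Cbox_closed B.Sbox_small] by blast
  have KF: "ennreal (F []) = phcontent s K" using Fe[of "[]"] KS by (simp add: Int_absorb2)
  have F1: "b * r' powr s / 2 \<le> F []"
  proof -
    have X: "0 \<le> b * r' powr s / 2" using b by simp
    have "ennreal (b * r' powr s) \<le> ennreal (F []) + ennreal (b * r' powr s / 2)"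
      using cont unfolding KF[symmetric] .
    also have "\<dots> = ennreal (F [] + b * r' powr s / 2)" by (rule ennreal_plus[symmetric, OF F0 X])
    finally have "ennreal (b * r' powr s) \<le> ennreal (F [] + b * r' powr s / 2)" .
    moreover have "0 \<le> F [] + b * r' powr s / 2" using F0[of "[]"] X by simp
    ultimately have "b * r' powr s \<le> F [] + b * r' powr s / 2" using ennreal_le_iff by blast
    then show ?thesis by simp
  qed
  have rr: "b * r' powr s / 2 = (b/2 * (1/2) powr s) * r powr s"
  proof -
    have "r' powr s = (r * (1/2)) powr s" unfolding r'_def by simp
    also have "\<dots> = r powr s * (1/2) powr s" by (rule powr_mult)
    finally show ?thesis by simp
  qed
  define Reg where "Reg = (ball x0 r \<times> {t0 - r^2 <..< t0 - (r/2^m)^2}) \<inter> - \<Omega>"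
  have KReg: "K \<subseteq> Reg"
  proof
    fix q assume "q \<in> K"
    then have q: "fst q \<in> cball x0 r'" "t0 - r'^2 \<le> snd q" "snd q \<le> t0 - h" "q \<notin> \<Omega>"
      unfolding K_def by (auto simp: mem_Times_iff)
    have "fst q \<in> ball x0 r" using q(1) r unfolding r'_def by simp
    moreover have "t0 - r^2 < snd q"
    proof -
      have "r'^2 < r^2" unfolding r'_def using r by (simp add: power_divide)
      then show ?thesis using q(2) by linarith
    qed
    moreover have "snd q < t0 - (r/2^m)^2"
    proof -
      have four: "(4::real)^m = 2^m * 2^m" using power_mult_distrib[of "2::real" 2 m] by simp
      have "(r/2^m)^2 = r^2 / 4^m" using four by (simp add: power_divide power2_eq_square)
      also have "\<dots> < h" unfolding h_def L_def using r by (simp add: power_mult_distrib divide_strict_right_mono)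
      finally show ?thesis using q(3) by simp
    qed
    ultimately show "q \<in> Reg" unfolding Reg_def using q(4) by (cases q) auto
  qed
  have RegM: "Reg \<in> sets \<mu>"
  proof -
    have "open (ball x0 r \<times> {t0 - r^2 <..< t0 - (r/2^m)^2})" by (intro open_Times) auto
    moreover have "closed (- \<Omega>)" using \<Omega> by (simp add: closed_def)
    ultimately show ?thesis unfolding Reg_def \<mu>(1) by (intro sets.Int borel_open borel_closed)
  qed
  have low: "emeasure \<mu> Reg \<ge> ennreal ((b/2 * (1/2) powr s) * r powr s)"
  proof -
    have "ennreal ((b/2 * (1/2) powr s) * r powr s) \<le> ennreal (F [])" using F1 rr by (simp add: ennreal_leI)
    also have "\<dots> = emeasure \<mu> K" using \<mu>(2) by simp
    also have "\<dots> \<le> emeasure \<mu> Reg" by (rule emeasure_mono[OF KReg RegM])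
    finally show ?thesis .
  qed
  have up: "\<forall>A \<in> sets borel. bounded A \<longrightarrow>
        emeasure \<mu> A \<le> ennreal (((4 * real CARD('n) + 2)^CARD('n) * (8 * real CARD('n)^2 + 2)) * pdiam A powr s)"
  proof (intro ballI impI)
    fix A :: "'n pt set" assume A: "A \<in> sets borel" "bounded A"
    show "emeasure \<mu> A \<le> ennreal (((4 * real CARD('n) + 2)^CARD('n) * (8 * real CARD('n)^2 + 2)) * pdiam A powr s)"
      by (rule B.upper_bound[OF s Fle _ A(2)]) (use \<mu>(3) A(1) in blast)
  qed
  show ?thesis using \<mu>(1) low up unfolding Reg_def by blast
qed

theorem lemma3p9:
  "\<exists>C1>0. \<forall>b>0. \<forall>\<epsilon>>0. \<exists>a c3. 0 < a \<and> a < 1/2 \<and> c3 > 0 \<and>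
     (\<forall>\<Omega> :: 'n::finite pt set. open \<Omega> \<and> TBHCC \<Omega> b \<epsilon> \<longrightarrow>
       (\<forall>x0 t0 r. (x0, t0) \<in> Sigma_bdry \<Omega> \<and> 0 < r \<and> Tmin \<Omega> < ereal (t0 - (4*r)^2) \<longrightarrow>
         (\<exists>\<mu> :: 'n pt measure. sets \<mu> = sets borel \<and>
            emeasure \<mu> ((ball x0 r \<times> {t0 - r^2 <..< t0 - (a*r)^2}) \<inter> - \<Omega>)
              \<ge> ennreal (c3 * r powr (real CARD('n) + \<epsilon>)) \<and>
            (\<forall>A \<in> sets borel. bounded A \<longrightarrow>
               emeasure \<mu> A \<le> ennreal (C1 * pdiam A powr (real CARD('n) + \<epsilon>))))))"
proof -
  define C1 where "C1 = (4 * real CARD('n) + 2)^CARD('n) * (8 * real CARD('n)^2 + 2)"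
  have q: "0 < 8 * real CARD('n)^2 + 2"
  proof -
    have "0 \<le> real CARD('n)^2" by simp
    then show ?thesis by linarith
  qed
  have C1: "0 < C1" unfolding C1_def using q by (intro mult_pos_pos zero_less_power) auto
  have main: "\<exists>a c3. 0 < a \<and> a < 1/2 \<and> c3 > 0 \<and>
     (\<forall>\<Omega> :: 'n::finite pt set. open \<Omega> \<and> TBHCC \<Omega> b \<epsilon> \<longrightarrow>
       (\<forall>x0 t0 r. (x0, t0) \<in> Sigma_bdry \<Omega> \<and> 0 < r \<and> Tmin \<Omega> < ereal (t0 - (4*r)^2) \<longrightarrow>
         (\<exists>\<mu> :: 'n pt measure. sets \<mu> = sets borel \<and>
            emeasure \<mu> ((ball x0 r \<times> {t0 - r^2 <..< t0 - (a*r)^2}) \<inter> - \<Omega>)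
              \<ge> ennreal (c3 * r powr (real CARD('n) + \<epsilon>)) \<and>
            (\<forall>A \<in> sets borel. bounded A \<longrightarrow>
               emeasure \<mu> A \<le> ennreal (C1 * pdiam A powr (real CARD('n) + \<epsilon>))))))"
    if b: "0 < b" and \<epsilon>: "0 < \<epsilon>" for b \<epsilon> :: real
  proof -
    define s where "s = real CARD('n) + \<epsilon>"
    have c: "1 < 2 powr \<epsilon>" using \<epsilon> by simp
    obtain M0 where M0: "2 * (4 * real CARD('n)) powr s / b < (2 powr \<epsilon>)^M0"
      using real_arch_pow[OF c] by blast
    define m where "m = M0 + 2"
    have m: "2 \<le> m" unfolding m_def by simp
    have "(2 powr \<epsilon>)^M0 \<le> (2 powr \<epsilon>)^m" unfolding m_def using c by (intro power_increasing) auto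
    then have Hm: "2 * (4 * real CARD('n)) powr s / b \<le> (2 powr \<epsilon>)^m" using M0 by simp
    define a :: real where "a = 1 / 2^m"
    define c3 where "c3 = b/2 * (1/2) powr s"
    have a0: "0 < a" unfolding a_def by simp
    have "(4::real) \<le> 2^m" using m by (metis power_increasing one_le_numeral power2_eq_square numeral_times_numeral semiring_norm(12) semiring_norm(13) num_double)
    then have a1: "a < 1/2" unfolding a_def by (simp add: field_simps)
    have c3: "0 < c3" unfolding c3_def using b by simp
    have "\<forall>\<Omega> :: 'n::finite pt set. open \<Omega> \<and> TBHCC \<Omega> b \<epsilon> \<longrightarrow>
       (\<forall>x0 t0 r. (x0, t0) \<in> Sigma_bdry \<Omega> \<and> 0 < r \<and> Tmin \<Omega> < ereal (t0 - (4*r)^2) \<longrightarrow>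
         (\<exists>\<mu> :: 'n pt measure. sets \<mu> = sets borel \<and>
            emeasure \<mu> ((ball x0 r \<times> {t0 - r^2 <..< t0 - (a*r)^2}) \<inter> - \<Omega>)
              \<ge> ennreal (c3 * r powr (real CARD('n) + \<epsilon>)) \<and>
            (\<forall>A \<in> sets borel. bounded A \<longrightarrow>
               emeasure \<mu> A \<le> ennreal (C1 * pdiam A powr (real CARD('n) + \<epsilon>)))))"
    proof (intro allI impI)
      fix \<Omega> :: "'n pt set" and x0 t0 r
      assume \<Omega>: "open \<Omega> \<and> TBHCC \<Omega> b \<epsilon>"
        and p: "(x0, t0) \<in> Sigma_bdry \<Omega> \<and> 0 < r \<and> Tmin \<Omega> < ereal (t0 - (4*r)^2)"
      have r: "0 < r" using p by simp
      have "ereal (t0 - (4*r)^2) \<le> ereal (snd (x0,t0) - (4*(r/2))^2)" using r by (simp add: power2_eq_square)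
      then have T: "Tmin \<Omega> < ereal (snd (x0,t0) - (4*(r/2))^2)" using p by (meson less_le_trans)
      have all: "\<forall>p\<in>Sigma_bdry \<Omega>. \<forall>r. 0 < r \<and> Tmin \<Omega> < ereal (snd p - (4*r)^2) \<longrightarrow>
          phcontent s (PQminus r p \<inter> - \<Omega>) \<ge> ennreal (b * r powr s)"
        using \<Omega> unfolding TBHCC_def s_def by blast
      have imp: "0 < r/2 \<and> Tmin \<Omega> < ereal (snd (x0,t0) - (4*(r/2))^2) \<longrightarrow>
          phcontent s (PQminus (r/2) (x0,t0) \<inter> - \<Omega>) \<ge> ennreal (b * (r/2) powr s)"
        using all p by blast
      have r2: "0 < r/2" using r by simp
      have Hcont: "phcontent s (PQminus (r/2) (x0,t0) \<inter> - \<Omega>) \<ge> ennreal (b * (r/2) powr s)"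
        using imp r2 T by blast
      obtain \<mu> :: "'n pt measure" where \<mu>: "sets \<mu> = sets borel"
        "emeasure \<mu> ((ball x0 r \<times> {t0 - r^2 <..< t0 - (r/2^m)^2}) \<inter> - \<Omega>) \<ge> ennreal ((b/2 * (1/2) powr s) * r powr s)"
        "\<forall>A \<in> sets borel. bounded A \<longrightarrow>
        emeasure \<mu> A \<le> ennreal (((4 * real CARD('n) + 2)^CARD('n) * (8 * real CARD('n)^2 + 2)) * pdiam A powr s)"
        using core[of \<Omega> b \<epsilon> r m x0 t0] \<Omega> b \<epsilon> r m Hcont Hm unfolding s_def by blast
      have ar: "a * r = r / 2^m" unfolding a_def by simp
      show "\<exists>\<mu> :: 'n pt measure. sets \<mu> = sets borel \<and>
            emeasure \<mu> ((ball x0 r \<times> {t0 - r^2 <..< t0 - (a*r)^2}) \<inter> - \<Omega>)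
              \<ge> ennreal (c3 * r powr (real CARD('n) + \<epsilon>)) \<and>
            (\<forall>A \<in> sets borel. bounded A \<longrightarrow>
               emeasure \<mu> A \<le> ennreal (C1 * pdiam A powr (real CARD('n) + \<epsilon>)))"
        using \<mu> unfolding ar c3_def C1_def s_def by blast
    qed
    then show ?thesis using a0 a1 c3 by blast
  qed
  show ?thesis using C1 main by blast
qed

end
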